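(* Let $M$ be a matroid on $E=[n]$ and let $(M_1,\dots,M_d)$ be a $d$-th symmetric quasi power of $M$. The following are equivalent: (i) $\mathrm{rk}(M_d)=\binom{\mathrm{rk}(M)+d-1}{d}$; (ii) for every basis $B$ of $M$, $\mathrm{Sym}_d(B)$ is a basis of $M_d$; (iii) $V(M_d)=B(M)$ as sets; (iv) for every $\omega\in B(M)$, the set $\{x\in\mathrm{Sym}_d(E): x(\omega)>0\}$ is a flat of $M_d$.
   Context: $\mathbb{T}=\mathbb{R}\cup\{\infty\}$. $\mathrm{Sym}_d(E)$: multisets of size $d$ from $E$, written multiplicatively ($\alpha\beta$ = multiset union), $\mathrm{Sym}_0(E)=\{1\}$; identified with degree-$d$ monomials in $x_1,\dots,x_n$. For $\alpha\in\mathrm{Sym}_{d-i}(E)$ and a matroid $N$ on $\mathrm{Sym}_d(E)$, $N|_\alpha$ is the restriction to $\{\alpha\beta:\beta\in\mathrm{Sym}_i(E)\}$. A $d$-th symmetric quasi power of $M$ is a sequence $(M_1,\dots,M_d)$ of matroids, $M_1=M$, $M_i$ on $\mathrm{Sym}_i(E)$, such that for every $1\le i\le d$ and $\alpha\in\mathrm{Sym}_{d-i}(E)$: if no element of $\alpha$ is a loop of $M$, $\beta\mapsto\alpha\beta$ is an isomorphism $M_i\cong M_d|_\alpha$; otherwise $\mathrm{rk}(M_d|_\alpha)=0$. For $x\in\mathrm{Sym}_d(E)$ and $\omega\in\mathbb{T}^n$, $x(\omega)=\sum_{j\in x}\omega_j$ (with multiplicity; $\infty$ if some term is $\infty$). For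 $C\subseteq\mathrm{Sym}_d(E)$, $V(p_C)$ is the set of $\omega\in\mathbb{T}^n$ such that $\min_{x\in C}x(\omega)$ is attained at least twice or equals $\infty$. The variety of $M_d$ is $V(M_d)=\bigcap_{C\text{ circuit of }M_d}V(p_C)\subseteq\mathbb{T}^n$, and the Bergman fan of $M$ is $B(M)=V(M_1)=\bigcap_{C\text{ circuit of }M}V(p_C)$. *)

theory Defs
  imports Main "HOL-Library.Multiset" "HOL-Library.Extended_Real"
begin

type_synonym 'a matroid = "'a set \<times> ('a set \<Rightarrow> bool)"

definition ground :: "'a matroid \<Rightarrow> 'a set" where "ground M = fst M"
definition indep :: "'a matroid \<Rightarrow> 'a set \<Rightarrow> bool" where "indep M X = snd M X"

definition is_matroid :: "'a matroid \<Rightarrow> bool" where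
  "is_matroid M \<longleftrightarrow>
     finite (ground M) \<and>
     (\<forall>X. indep M X \<longrightarrow> X \<subseteq> ground M) \<and>
     indep M {} \<and>
     (\<forall>X Y. indep M X \<and> Y \<subseteq> X \<longrightarrow> indep M Y) \<and>
     (\<forall>X Y. indep M X \<and> indep M Y \<and> card X < card Y \<longrightarrow>
        (\<exists>e\<in>Y - X. indep M (insert e X)))"

definition rank_of :: "'a matroid \<Rightarrow> 'a set \<Rightarrow> nat" where
  "rank_of M X = Max (card ` {Y. Y \<subseteq> X \<and> indep M Y})"

definition rk :: "'a matroid \<Rightarrow> nat" where
  "rk M = rank_of M (ground M)"

definition basis :: "'a matroid \<Rightarrow> 'a set \<Rightarrow> bool" where
  "basis M B \<longleftrightarrow> indep M B \<and> (\<forall>Y. indep M Y \<and> B \<subseteq> Y \<longrightarrow> Y = B)"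

definition circuit :: "'a matroid \<Rightarrow> 'a set \<Rightarrow> bool" where
  "circuit M C \<longleftrightarrow> C \<subseteq> ground M \<and> \<not> indep M C \<and> (\<forall>e\<in>C. indep M (C - {e}))"

definition flat :: "'a matroid \<Rightarrow> 'a set \<Rightarrow> bool" where
  "flat M F \<longleftrightarrow> F \<subseteq> ground M \<and>
     (\<forall>e \<in> ground M - F. rank_of M (insert e F) > rank_of M F)"

definition loop :: "'a matroid \<Rightarrow> 'a \<Rightarrow> bool" where
  "loop M e \<longleftrightarrow> e \<in> ground M \<and> \<not> indep M {e}"

definition restr :: "'a matroid \<Rightarrow> 'a set \<Rightarrow> 'a matroid" where
  "restr M A = (A, \<lambda>X. X \<subseteq> A \<and> indep M X)"

definition matroid_iso :: "('a \<Rightarrow> 'b) \<Rightarrow> 'a matroid \<Rightarrow> 'b matroid \<Rightarrow> bool" where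
  "matroid_iso f M N \<longleftrightarrow> bij_betw f (ground M) (ground N) \<and>
     (\<forall>X. X \<subseteq> ground M \<longrightarrow> (indep M X \<longleftrightarrow> indep N (f ` X)))"

text \<open>\<open>Sym d E\<close>: multisets of size d with elements from E (degree-d monomials).\<close>
definition Sym :: "nat \<Rightarrow> 'a set \<Rightarrow> 'a multiset set" where
  "Sym d E = {x. set_mset x \<subseteq> E \<and> size x = d}"

text \<open>Ground set E = [n] = {1..n}. \<open>Ms i\<close> is M_i for 1 \<le> i \<le> d.\<close>
definition sym_quasi_power ::
    "nat \<Rightarrow> nat matroid \<Rightarrow> nat \<Rightarrow> (nat \<Rightarrow> nat multiset matroid) \<Rightarrow> bool" where
  "sym_quasi_power n M d Ms \<longleftrightarrow>
     1 \<le> d \<and>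
     (\<forall>i\<in>{1..d}. is_matroid (Ms i) \<and> ground (Ms i) = Sym i {1..n}) \<and>
     (\<forall>Y. Y \<subseteq> {1..n} \<longrightarrow> (indep (Ms 1) ((\<lambda>e. {#e#}) ` Y) \<longleftrightarrow> indep M Y)) \<and>
     (\<forall>i\<in>{1..d}. \<forall>\<alpha>\<in>Sym (d - i) {1..n}.
        (if (\<forall>e\<in>#\<alpha>. \<not> loop M e)
         then matroid_iso (\<lambda>\<beta>. \<alpha> + \<beta>) (Ms i)
                (restr (Ms d) ((\<lambda>\<beta>. \<alpha> + \<beta>) ` Sym i {1..n}))
         else rk (restr (Ms d) ((\<lambda>\<beta>. \<alpha> + \<beta>) ` Sym i {1..n})) = 0))"

text \<open>\<open>\<T>^n\<close> with \<open>\<T> = \<real> \<union> {\<infinity>}\<close>: vectors indexed by 1..n with values in ereal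
  other than -\<infinity>; coordinates outside 1..n are normalized to 0.\<close>
definition tropn :: "nat \<Rightarrow> (nat \<Rightarrow> ereal) set" where
  "tropn n = {\<omega>. (\<forall>i\<in>{1..n}. \<omega> i \<noteq> -\<infinity>) \<and> (\<forall>i. i \<notin> {1..n} \<longrightarrow> \<omega> i = 0)}"

definition mon_eval :: "nat multiset \<Rightarrow> (nat \<Rightarrow> ereal) \<Rightarrow> ereal" where
  "mon_eval x \<omega> = sum_mset (image_mset \<omega> x)"

definition Vp :: "nat \<Rightarrow> ('a \<Rightarrow> (nat \<Rightarrow> ereal) \<Rightarrow> ereal) \<Rightarrow> 'a set \<Rightarrow> (nat \<Rightarrow> ereal) set" where
  "Vp n ev C = {\<omega>\<in>tropn n.
     (let m = Min ((\<lambda>x. ev x \<omega>) ` C) in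
       m = \<infinity> \<or> (\<exists>x\<in>C. \<exists>y\<in>C. x \<noteq> y \<and> ev x \<omega> = m \<and> ev y \<omega> = m))}"

definition tropV :: "nat \<Rightarrow> ('a \<Rightarrow> (nat \<Rightarrow> ereal) \<Rightarrow> ereal) \<Rightarrow> 'a matroid \<Rightarrow> (nat \<Rightarrow> ereal) set" where
  "tropV n ev N = tropn n \<inter> (\<Inter>C\<in>{C. circuit N C}. Vp n ev C)"

definition variety :: "nat \<Rightarrow> nat multiset matroid \<Rightarrow> (nat \<Rightarrow> ereal) set" where
  "variety n N = tropV n mon_eval N"

definition bergman_fan :: "nat \<Rightarrow> nat matroid \<Rightarrow> (nat \<Rightarrow> ereal) set" where
  "bergman_fan n M = tropV n (\<lambda>j \<omega>. \<omega> j) M"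

end

theory Submission
  imports Defs
begin


locale mat = fixes N :: "'a matroid" assumes ism: "is_matroid N"
begin

lemma fin_ground: "finite (ground N)" using ism unfolding is_matroid_def by blast
lemma indep_sub: "indep N X \<Longrightarrow> X \<subseteq> ground N" using ism unfolding is_matroid_def by blast
lemma indep_empty: "indep N {}" using ism unfolding is_matroid_def by blast
lemma indep_subset: "indep N X \<Longrightarrow> Y \<subseteq> X \<Longrightarrow> indep N Y" using ism unfolding is_matroid_def by blast
lemma aug_ax: "indep N X \<Longrightarrow> indep N Y \<Longrightarrow> card X < card Y \<Longrightarrow> \<exists>e\<in>Y-X. indep N (insert e X)"
  using ism unfolding is_matroid_def by blast
lemma indep_finite: "indep N X \<Longrightarrow> finite X" using indep_sub fin_ground finite_subset by blast

lemma isets_fin: "finite {Y. Y \<subseteq> X \<and> indep N Y}"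
proof -
  have "{Y. Y \<subseteq> X \<and> indep N Y} \<subseteq> Pow (ground N)" using indep_sub by auto
  thus ?thesis using fin_ground finite_subset by blast
qed

lemma rank_ge: assumes "Y \<subseteq> X" "indep N Y" shows "card Y \<le> rank_of N X"
proof -
  have "card Y \<in> card ` {Y. Y \<subseteq> X \<and> indep N Y}" using assms by blast
  thus ?thesis unfolding rank_of_def by (rule Max_ge[OF finite_imageI[OF isets_fin], rotated])
qed

lemma rank_ex: "\<exists>Y. Y \<subseteq> X \<and> indep N Y \<and> card Y = rank_of N X"
proof -
  have "{} \<in> {Y. Y \<subseteq> X \<and> indep N Y}" using indep_empty by simp
  hence ne: "card ` {Y. Y \<subseteq> X \<and> indep N Y} \<noteq> {}" by (simp only: image_is_empty) blast
  have "rank_of N X \<in> card ` {Y. Y \<subseteq> X \<and> indep N Y}"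
    unfolding rank_of_def by (rule Max_in[OF finite_imageI[OF isets_fin] ne])
  then obtain Y where "Y \<in> {Y. Y \<subseteq> X \<and> indep N Y}" "rank_of N X = card Y" by (rule imageE)
  thus ?thesis by auto
qed

lemma rank_mono: assumes "X \<subseteq> Y" shows "rank_of N X \<le> rank_of N Y"
proof -
  obtain Z where Z: "Z \<subseteq> X" "indep N Z" "card Z = rank_of N X" using rank_ex by blast
  have "Z \<subseteq> Y" using Z(1) assms by (rule subset_trans)
  from rank_ge[OF this Z(2)] Z(3) show ?thesis by simp
qed

lemma rank_card: assumes "finite X" shows "rank_of N X \<le> card X"
proof -
  obtain Z where Z: "Z \<subseteq> X" "indep N Z" "card Z = rank_of N X" using rank_ex by blast
  from card_mono[OF assms Z(1)] Z(3) show ?thesis by simp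
qed

lemma rank_indep: assumes "indep N X" shows "rank_of N X = card X"
proof (rule antisym)
  show "rank_of N X \<le> card X" by (rule rank_card[OF indep_finite[OF assms]])
  show "card X \<le> rank_of N X" by (rule rank_ge[OF subset_refl assms])
qed

lemma rank_ground_int: "rank_of N X = rank_of N (X \<inter> ground N)"
proof -
  have "{Y. Y \<subseteq> X \<and> indep N Y} = {Y. Y \<subseteq> X \<inter> ground N \<and> indep N Y}" using indep_sub by auto
  thus ?thesis unfolding rank_of_def by simp
qed

lemma aug: assumes "indep N I" "I \<subseteq> X"
  shows "\<exists>J. I \<subseteq> J \<and> J \<subseteq> X \<and> indep N J \<and> card J = rank_of N X"
proof -
  define S where "S = {J. I \<subseteq> J \<and> J \<subseteq> X \<and> indep N J}"
  have sub: "S \<subseteq> {Y. Y \<subseteq> X \<and> indep N Y}" unfolding S_def by blast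
  have fS: "finite S" by (rule finite_subset[OF sub isets_fin])
  have "I \<in> S" using assms unfolding S_def by simp
  hence ne: "card ` S \<noteq> {}" by (simp only: image_is_empty) blast
  have "Max (card ` S) \<in> card ` S" by (rule Max_in[OF finite_imageI[OF fS] ne])
  then obtain J where J: "J \<in> S" "Max (card ` S) = card J" by (rule imageE)
  have JS: "I \<subseteq> J" "J \<subseteq> X" "indep N J" using J(1) unfolding S_def by simp_all
  have le: "card J \<le> rank_of N X" by (rule rank_ge[OF JS(2,3)])
  show ?thesis
  proof (cases "card J < rank_of N X")
    case True
    obtain K where K: "K \<subseteq> X" "indep N K" "card K = rank_of N X" using rank_ex by blast
    have "card J < card K" using True K(3) by simp
    then obtain e where e: "e \<in> K - J" "indep N (insert e J)" using aug_ax[OF JS(3) K(2)] by blast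
    have "insert e J \<in> S" using e JS K(1) unfolding S_def by auto
    hence "card (insert e J) \<le> Max (card ` S)" using fS by simp
    moreover have "card (insert e J) = card J + 1" using e indep_finite[OF JS(3)] by simp
    ultimately show ?thesis using J(2) by simp
  next
    case False
    hence "card J = rank_of N X" using le by simp
    thus ?thesis using JS by blast
  qed
qed

lemma submod: "rank_of N (X \<union> Y) + rank_of N (X \<inter> Y) \<le> rank_of N X + rank_of N Y"
proof -
  obtain I where I: "I \<subseteq> X \<inter> Y" "indep N I" "card I = rank_of N (X \<inter> Y)" using rank_ex by blast
  obtain J where J: "I \<subseteq> J" "J \<subseteq> X \<union> Y" "indep N J" "card J = rank_of N (X \<union> Y)"
    using aug[of I "X \<union> Y"] I by auto
  have fJ: "finite J" using J indep_finite by auto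
  have a: "card (J \<inter> X) \<le> rank_of N X" using J indep_subset rank_ge by auto
  have b: "card (J \<inter> Y) \<le> rank_of N Y" using J indep_subset rank_ge by auto
  have u: "(J \<inter> X) \<union> (J \<inter> Y) = J" using J by auto
  have "card (J \<inter> X) + card (J \<inter> Y) = card ((J \<inter> X) \<union> (J \<inter> Y)) + card ((J \<inter> X) \<inter> (J \<inter> Y))"
    using card_Un_Int[of "J \<inter> X" "J \<inter> Y"] fJ by auto
  hence "card (J \<inter> X) + card (J \<inter> Y) = card J + card ((J \<inter> X) \<inter> (J \<inter> Y))" using u by simp
  moreover have "card I \<le> card ((J \<inter> X) \<inter> (J \<inter> Y))" using I J fJ by (intro card_mono) auto
  ultimately show ?thesis using a b I J by linarith
qed

definition inspan :: "'a set \<Rightarrow> 'a \<Rightarrow> bool" where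
  "inspan X y \<longleftrightarrow> rank_of N (insert y X) = rank_of N X"

lemma inspan_mem: "y \<in> X \<Longrightarrow> inspan X y" unfolding inspan_def by (simp add: insert_absorb)

lemma inspan_mono: assumes "X \<subseteq> Y" "inspan X y" shows "inspan Y y"
proof -
  have "rank_of N (insert y X \<union> Y) + rank_of N (insert y X \<inter> Y) \<le> rank_of N (insert y X) + rank_of N Y"
    by (rule submod)
  moreover have "insert y X \<union> Y = insert y Y" using assms by auto
  ultimately have "rank_of N (insert y Y) + rank_of N (insert y X \<inter> Y) \<le> rank_of N (insert y X) + rank_of N Y" by simp
  moreover have "rank_of N X \<le> rank_of N (insert y X \<inter> Y)" using assms by (intro rank_mono) auto
  moreover have "rank_of N Y \<le> rank_of N (insert y Y)" by (intro rank_mono) auto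
  ultimately show ?thesis using assms(2) unfolding inspan_def by linarith
qed

lemma rank_union_span_fin: "finite Z \<Longrightarrow> (\<forall>z\<in>Z. inspan X z) \<Longrightarrow> rank_of N (X \<union> Z) = rank_of N X"
proof (induction Z rule: finite_induct)
  case empty thus ?case by simp
next
  case (insert z Z)
  have "inspan (X \<union> Z) z" using insert inspan_mono[of X "X \<union> Z" z] by auto
  thus ?case using insert unfolding inspan_def by auto
qed

lemma rank_union_span: assumes "\<forall>z\<in>Z. inspan X z" shows "rank_of N (X \<union> Z) = rank_of N X"
proof -
  have f: "finite (Z \<inter> ground N)" using fin_ground by auto
  have "rank_of N (X \<union> Z) = rank_of N ((X \<union> Z) \<inter> ground N)" by (rule rank_ground_int)
  also have "(X \<union> Z) \<inter> ground N = (X \<union> (Z \<inter> ground N)) \<inter> ground N" by auto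
  also have "rank_of N \<dots> = rank_of N (X \<union> (Z \<inter> ground N))" by (rule rank_ground_int[symmetric])
  also have "\<dots> = rank_of N X" using rank_union_span_fin[OF f] assms by auto
  finally show ?thesis .
qed

lemma inspan_trans: assumes "\<forall>z\<in>Z. inspan X z" "inspan Z y" shows "inspan X y"
proof -
  have "inspan (X \<union> Z) y" using inspan_mono[OF _ assms(2)] by auto
  hence "rank_of N (insert y (X \<union> Z)) = rank_of N X" using rank_union_span[OF assms(1)] unfolding inspan_def by auto
  moreover have "rank_of N (insert y X) \<le> rank_of N (insert y (X \<union> Z))" by (intro rank_mono) auto
  moreover have "rank_of N X \<le> rank_of N (insert y X)" by (intro rank_mono) auto
  ultimately show ?thesis unfolding inspan_def by linarith
qed

lemma indep_inspan: assumes "indep N X" "y \<notin> X" shows "inspan X y \<longleftrightarrow> \<not> indep N (insert y X)"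
proof
  assume "inspan X y"
  thus "\<not> indep N (insert y X)" using assms rank_indep[of X] rank_indep[of "insert y X"] indep_finite[of X]
    unfolding inspan_def by auto
next
  assume d: "\<not> indep N (insert y X)"
  obtain Y where Y: "Y \<subseteq> insert y X" "indep N Y" "card Y = rank_of N (insert y X)" using rank_ex by blast
  have fX: "finite X" using assms indep_finite by auto
  have "card Y \<le> card X"
  proof (cases "Y = insert y X")
    case True thus ?thesis using d Y by auto
  next
    case False
    hence "card Y < card (insert y X)" using Y fX by (intro psubset_card_mono) auto
    thus ?thesis using assms fX by auto
  qed
  hence "rank_of N (insert y X) \<le> rank_of N X" using Y rank_indep[OF assms(1)] by auto
  moreover have "rank_of N X \<le> rank_of N (insert y X)" by (intro rank_mono) auto
  ultimately show "inspan X y" unfolding inspan_def by (rule antisym)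
qed

lemma dep_inspan: assumes "\<not> indep N {y}" shows "inspan X y"
proof -
  obtain Y where Y: "Y \<subseteq> insert y X" "indep N Y" "card Y = rank_of N (insert y X)" using rank_ex by blast
  have "y \<notin> Y" using Y(2) assms indep_subset[of Y "{y}"] by blast
  hence "Y \<subseteq> X" using Y by auto
  hence "card Y \<le> rank_of N X" using rank_ge[of Y X] Y(2) by blast
  hence "rank_of N (insert y X) \<le> rank_of N X" using Y(3) by simp
  moreover have "rank_of N X \<le> rank_of N (insert y X)" by (intro rank_mono) auto
  ultimately show ?thesis unfolding inspan_def by (rule antisym)
qed

lemma circuit_span: assumes "circuit N C" "e \<in> C" shows "inspan (C - {e}) e"
proof -
  have i: "indep N (C - {e})" using assms unfolding circuit_def by blast
  have "insert e (C - {e}) = C" using assms(2) by blast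
  hence "\<not> indep N (insert e (C - {e}))" using assms(1) unfolding circuit_def by simp
  thus ?thesis using indep_inspan[OF i] by simp
qed

lemma circuit_fin: assumes "circuit N C" shows "finite C" "C \<noteq> {}"
proof -
  have "C \<subseteq> ground N" "\<not> indep N C" using assms unfolding circuit_def by simp_all
  thus "finite C" "C \<noteq> {}" using finite_subset[OF _ fin_ground] indep_empty by auto
qed

lemma dep_circuit: assumes "X \<subseteq> ground N" "\<not> indep N X" shows "\<exists>C. C \<subseteq> X \<and> circuit N C"
proof -
  define P where "P k \<longleftrightarrow> (\<exists>D. D \<subseteq> X \<and> \<not> indep N D \<and> card D = k)" for k
  have "P (card X)" using assms(2) unfolding P_def by blast
  hence "P (LEAST k. P k)" by (rule LeastI)
  then obtain D where D: "D \<subseteq> X" "\<not> indep N D" "card D = (LEAST k. P k)" unfolding P_def by blast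
  have fD: "finite D" using finite_subset[OF subset_trans[OF D(1) assms(1)] fin_ground] .
  have "\<forall>e\<in>D. indep N (D - {e})"
  proof
    fix e assume e: "e \<in> D"
    show "indep N (D - {e})"
    proof (rule ccontr)
      assume "\<not> indep N (D - {e})"
      moreover have "D - {e} \<subseteq> X" using D(1) by blast
      ultimately have "P (card (D - {e}))" unfolding P_def by blast
      hence "(LEAST k. P k) \<le> card (D - {e})" by (rule Least_le)
      moreover have "card (D - {e}) < card D" using card_Diff1_less[OF fD e] .
      ultimately show False using D(3) by simp
    qed
  qed
  moreover have "D \<subseteq> ground N" using D(1) assms(1) by (rule subset_trans)
  ultimately have "circuit N D" using D(2) unfolding circuit_def by simp
  thus ?thesis using D(1) by blast
qed

lemma fund_circuit: assumes "indep N I" "y \<in> ground N" "\<not> indep N (insert y I)"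
  shows "\<exists>C. circuit N C \<and> C \<subseteq> insert y I \<and> y \<in> C"
proof -
  have "insert y I \<subseteq> ground N" using assms(2) indep_sub[OF assms(1)] by simp
  then obtain C where C: "C \<subseteq> insert y I" "circuit N C"
    using dep_circuit[OF _ assms(3)] by blast
  have "y \<in> C"
  proof (rule ccontr)
    assume "y \<notin> C" hence "C \<subseteq> I" using C(1) by blast
    hence "indep N C" by (rule indep_subset[OF assms(1)])
    thus False using C(2) unfolding circuit_def by simp
  qed
  thus ?thesis using C by blast
qed

lemma span_indep_card: assumes "indep N P" "P \<subseteq> A" "\<forall>y\<in>A. inspan P y" shows "rank_of N A = card P"
proof -
  have "rank_of N (P \<union> A) = rank_of N P" by (rule rank_union_span[OF assms(3)])
  moreover have "P \<union> A = A" using assms(2) by (rule Un_absorb1)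
  ultimately show ?thesis using rank_indep[OF assms(1)] by simp
qed

lemma span_card_indep: assumes "finite Q" "Q \<subseteq> A" "\<forall>y\<in>A. inspan Q y" "card Q = rank_of N A"
  shows "indep N Q"
proof -
  have "rank_of N (Q \<union> A) = rank_of N Q" by (rule rank_union_span[OF assms(3)])
  moreover have "Q \<union> A = A" using assms(2) by (rule Un_absorb1)
  ultimately have r: "rank_of N Q = card Q" using assms(4) by simp
  obtain Y where Y: "Y \<subseteq> Q" "indep N Y" "card Y = rank_of N Q" using rank_ex by blast
  have "Y = Q" using card_subset_eq[OF assms(1) Y(1)] Y(3) r by simp
  thus ?thesis using Y(2) by simp
qed

lemma basis_span: assumes "basis N B" shows "inspan B y"
proof (cases "y \<in> B")
  case True thus ?thesis by (rule inspan_mem)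
next
  case False
  have i: "indep N B" using assms unfolding basis_def by simp
  have "\<not> indep N (insert y B)"
  proof
    assume "indep N (insert y B)"
    hence "insert y B = B" using assms unfolding basis_def by blast
    thus False using False by blast
  qed
  thus ?thesis using indep_inspan[OF i False] by simp
qed

lemma basis_card: assumes "basis N B" shows "card B = rk N"
proof -
  have i: "indep N B" using assms unfolding basis_def by simp
  have "rank_of N (ground N) = card B"
    by (rule span_indep_card[OF i indep_sub[OF i]]) (simp add: basis_span[OF assms])
  thus ?thesis unfolding rk_def by simp
qed

lemma indep_card_basis: assumes "indep N B" "card B = rk N" shows "basis N B"
  unfolding basis_def
proof (intro conjI allI impI)
  fix Y assume Y: "indep N Y \<and> B \<subseteq> Y"
  have "card Y \<le> rk N" unfolding rk_def using Y by (intro rank_ge indep_sub) simp_all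
  hence "card Y \<le> card B" using assms(2) by simp
  thus "Y = B" using card_seteq[OF indep_finite _ ] Y by (metis card_seteq indep_finite)
qed (rule assms(1))

lemma ex_basis: assumes "indep N I" shows "\<exists>B. basis N B \<and> I \<subseteq> B"
proof -
  obtain J where J: "I \<subseteq> J" "J \<subseteq> ground N" "indep N J" "card J = rank_of N (ground N)"
    using aug[OF assms indep_sub[OF assms]] by blast
  have "basis N J" using J(3,4) by (intro indep_card_basis) (simp_all add: rk_def)
  thus ?thesis using J(1) by blast
qed

end


lemma Sym_eq: "Sym d A = multisets_of_size A d" by (simp add: Sym_def multisets_of_size_def)
lemma Sym_iff: "x \<in> Sym i A \<longleftrightarrow> set_mset x \<subseteq> A \<and> size x = i" by (simp add: Sym_def)
lemma Sym_add: "a \<in> Sym i A \<Longrightarrow> b \<in> Sym j A \<Longrightarrow> a + b \<in> Sym (i+j) A" by (simp add: Sym_def)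
lemma Sym_minus: "a \<in> Sym i A \<Longrightarrow> e \<in># a \<Longrightarrow> a - {#e#} \<in> Sym (i - 1) A"
  by (auto simp: Sym_def size_Diff_singleton dest: in_diffD)
lemma Sym_mono: "A \<subseteq> B \<Longrightarrow> Sym i A \<subseteq> Sym i B" by (auto simp: Sym_def)
lemma Sym_0: "Sym 0 A = {{#}}" by (auto simp: Sym_def)
lemma Sym_empty: "1 \<le> i \<Longrightarrow> Sym i {} = {}" by (auto simp: Sym_def)
lemma Sym_fin: "finite A \<Longrightarrow> finite (Sym i A)" by (simp add: Sym_eq finite_multisets_of_size)
lemma Sym_card: "finite A \<Longrightarrow> card (Sym i A) = (card A + i - 1) choose i" by (simp add: Sym_eq card_multisets_of_size)
lemma Sym_1: "(\<lambda>e. {#e#}) ` A \<subseteq> Sym 1 A" by (auto simp: Sym_def)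

lemma mon_eval_add: "mon_eval (a + b) \<omega> = mon_eval a \<omega> + mon_eval b \<omega>" by (simp add: mon_eval_def)
lemma mon_eval_single: "mon_eval {#e#} \<omega> = \<omega> e" by (simp add: mon_eval_def)
lemma mon_eval_empty: "mon_eval {#} \<omega> = 0" by (simp add: mon_eval_def)

locale qp = fixes n d :: nat and M :: "nat matroid" and Ms :: "nat \<Rightarrow> nat multiset matroid"
  assumes M: "is_matroid M" and gM: "ground M = {1..n}" and QP: "sym_quasi_power n M d Ms"
begin

abbreviation "E \<equiv> {1..n}"
abbreviation "N \<equiv> Ms d"
definition lf :: "nat multiset \<Rightarrow> bool" where "lf \<gamma> \<longleftrightarrow> (\<forall>e\<in>#\<gamma>. \<not> loop M e)"

lemma QP_parts: "1 \<le> d" "\<forall>i\<in>{1..d}. is_matroid (Ms i) \<and> ground (Ms i) = Sym i E"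
  "\<forall>Y. Y \<subseteq> E \<longrightarrow> (indep (Ms 1) ((\<lambda>e. {#e#}) ` Y) \<longleftrightarrow> indep M Y)"
  "\<forall>i\<in>{1..d}. \<forall>\<alpha>\<in>Sym (d - i) E.
        (if (\<forall>e\<in>#\<alpha>. \<not> loop M e)
         then matroid_iso (\<lambda>\<beta>. \<alpha> + \<beta>) (Ms i)
                (restr (Ms d) ((\<lambda>\<beta>. \<alpha> + \<beta>) ` Sym i E))
         else rk (restr (Ms d) ((\<lambda>\<beta>. \<alpha> + \<beta>) ` Sym i E)) = 0)"
proof -
  note A = QP[unfolded sym_quasi_power_def]
  show "1 \<le> d" by (rule conjunct1[OF A])
  show "\<forall>i\<in>{1..d}. is_matroid (Ms i) \<and> ground (Ms i) = Sym i E" by (rule conjunct1[OF conjunct2[OF A]])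
  show "\<forall>Y. Y \<subseteq> E \<longrightarrow> (indep (Ms 1) ((\<lambda>e. {#e#}) ` Y) \<longleftrightarrow> indep M Y)"
    by (rule conjunct1[OF conjunct2[OF conjunct2[OF A]]])
  show "\<forall>i\<in>{1..d}. \<forall>\<alpha>\<in>Sym (d - i) E.
        (if (\<forall>e\<in>#\<alpha>. \<not> loop M e)
         then matroid_iso (\<lambda>\<beta>. \<alpha> + \<beta>) (Ms i)
                (restr (Ms d) ((\<lambda>\<beta>. \<alpha> + \<beta>) ` Sym i E))
         else rk (restr (Ms d) ((\<lambda>\<beta>. \<alpha> + \<beta>) ` Sym i E)) = 0)"
    by (rule conjunct2[OF conjunct2[OF conjunct2[OF A]]])
qed

lemma d1: "1 \<le> d" by (rule QP_parts(1))
lemma dd: "d \<in> {1..d}" using d1 by simp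
lemma Ms_mat: "i \<in> {1..d} \<Longrightarrow> is_matroid (Ms i)" using QP_parts(2) by simp
lemma Ms_ground: "i \<in> {1..d} \<Longrightarrow> ground (Ms i) = Sym i E" using QP_parts(2) by simp
lemma N_mat: "is_matroid N" using Ms_mat[OF dd] .
lemma N_ground: "ground N = Sym d E" using Ms_ground[OF dd] .

sublocale MM: mat M by (rule mat.intro[OF M])
sublocale NN: mat "Ms d" by (rule mat.intro[OF N_mat])

lemma nonloop_indep1: "e \<in> E \<Longrightarrow> \<not> loop M e \<Longrightarrow> indep M {e}" using gM unfolding loop_def by simp

lemma rk_restr: "rk (restr N A) = rank_of N A"
  unfolding rk_def rank_of_def by (simp add: ground_def restr_def indep_def)

lemma SI: assumes i: "i \<in> {1..d}" and g: "\<gamma> \<in> Sym (d-i) E" "lf \<gamma>" and X: "X \<subseteq> Sym i E"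
  shows "indep N ((+) \<gamma> ` X) \<longleftrightarrow> indep (Ms i) X"
proof -
  have "(if (\<forall>e\<in>#\<gamma>. \<not> loop M e)
         then matroid_iso (\<lambda>\<beta>. \<gamma> + \<beta>) (Ms i)
                (restr (Ms d) ((\<lambda>\<beta>. \<gamma> + \<beta>) ` Sym i E))
         else rk (restr (Ms d) ((\<lambda>\<beta>. \<gamma> + \<beta>) ` Sym i E)) = 0)"
    using bspec[OF bspec[OF QP_parts(4) i] g(1)] .
  hence iso: "matroid_iso (\<lambda>\<beta>. \<gamma> + \<beta>) (Ms i) (restr N ((\<lambda>\<beta>. \<gamma> + \<beta>) ` Sym i E))"
    using g(2) unfolding lf_def by simp
  have "X \<subseteq> ground (Ms i)" using X Ms_ground[OF i] by simp
  hence "indep (Ms i) X \<longleftrightarrow> indep (restr N ((\<lambda>\<beta>. \<gamma> + \<beta>) ` Sym i E)) ((\<lambda>\<beta>. \<gamma> + \<beta>) ` X)"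
    using iso unfolding matroid_iso_def by blast
  also have "\<dots> \<longleftrightarrow> indep N ((+) \<gamma> ` X)" using X unfolding restr_def indep_def by auto
  finally show ?thesis by simp
qed

lemma sing1: "Y \<subseteq> E \<Longrightarrow> indep (Ms 1) ((\<lambda>e. {#e#}) ` Y) \<longleftrightarrow> indep M Y"
  using QP_parts(3) by blast

lemma SING: assumes g: "\<gamma> \<in> Sym (d-1) E" "lf \<gamma>" and Y: "Y \<subseteq> E"
  shows "indep N ((\<lambda>e. \<gamma> + {#e#}) ` Y) \<longleftrightarrow> indep M Y"
proof -
  have "(\<lambda>e. \<gamma> + {#e#}) ` Y = (+) \<gamma> ` ((\<lambda>e. {#e#}) ` Y)" by (simp add: image_image)
  moreover have X: "(\<lambda>e. {#e#}) ` Y \<subseteq> Sym 1 E" using Y by (auto simp: Sym_def)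
  moreover have i: "1 \<in> {1..d}" using d1 by simp
  ultimately show ?thesis using SI[OF i g X] sing1[OF Y] by simp
qed

lemma rank_tr: assumes g: "\<gamma> \<in> Sym (d-1) E" "lf \<gamma>" and X: "X \<subseteq> E"
  shows "rank_of N ((\<lambda>e. \<gamma> + {#e#}) ` X) = rank_of M X"
proof -
  define h where "h = (\<lambda>e::nat. \<gamma> + {#e#})"
  have inj: "inj h" unfolding h_def by (rule injI) simp
  have SG: "\<And>Y. Y \<subseteq> E \<Longrightarrow> indep N (h ` Y) \<longleftrightarrow> indep M Y" unfolding h_def by (rule SING[OF g])
  have eq: "{Z. Z \<subseteq> h ` X \<and> indep N Z} = (image h) ` {Y. Y \<subseteq> X \<and> indep M Y}"
  proof (rule set_eqI)
    fix Z show "Z \<in> {Z. Z \<subseteq> h ` X \<and> indep N Z} \<longleftrightarrow> Z \<in> (image h) ` {Y. Y \<subseteq> X \<and> indep M Y}"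
    proof
      assume Z: "Z \<in> {Z. Z \<subseteq> h ` X \<and> indep N Z}"
      hence Z1: "Z \<subseteq> h ` X" and Z2: "indep N Z" by simp_all
      define Y where "Y = {e\<in>X. h e \<in> Z}"
      have ZY: "Z = h ` Y"
      proof
        show "Z \<subseteq> h ` Y"
        proof
          fix z assume "z \<in> Z"
          with Z1 obtain e where "e \<in> X" "z = h e" by (rule subsetD[THEN imageE])
          thus "z \<in> h ` Y" unfolding Y_def using \<open>z \<in> Z\<close> by simp
        qed
        show "h ` Y \<subseteq> Z" unfolding Y_def by (rule subsetI) (erule imageE, simp)
      qed
      have YX: "Y \<subseteq> X" unfolding Y_def by (rule subsetI) simp
      hence "Y \<subseteq> E" using X by (rule subset_trans)
      hence "indep M Y" using SG Z2 ZY by simp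
      hence "Y \<in> {Y. Y \<subseteq> X \<and> indep M Y}" using YX by simp
      thus "Z \<in> (image h) ` {Y. Y \<subseteq> X \<and> indep M Y}" using ZY by (intro image_eqI[of Z "image h" Y]) simp_all
    next
      assume "Z \<in> (image h) ` {Y. Y \<subseteq> X \<and> indep M Y}"
      then obtain Y where Y: "Y \<in> {Y. Y \<subseteq> X \<and> indep M Y}" "Z = h ` Y" by (rule imageE)
      have Y1: "Y \<subseteq> X" and Y2: "indep M Y" using Y(1) by simp_all
      have "Y \<subseteq> E" using Y1 X by (rule subset_trans)
      hence "indep N Z" using SG Y2 Y(2) by simp
      moreover have "Z \<subseteq> h ` X" using Y(2) Y1 by (simp add: image_mono)
      ultimately show "Z \<in> {Z. Z \<subseteq> h ` X \<and> indep N Z}" by simp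
    qed
  qed
  have ci: "\<And>Y. card (h ` Y) = card Y" by (rule card_image[OF inj_on_subset[OF inj subset_UNIV]])
  have "card ` {Z. Z \<subseteq> h ` X \<and> indep N Z} = card ` {Y. Y \<subseteq> X \<and> indep M Y}"
    unfolding eq image_image ci ..
  hence "rank_of N (h ` X) = rank_of M X" unfolding rank_of_def by simp
  thus ?thesis unfolding h_def .
qed

lemma span_tr: assumes g: "\<gamma> \<in> Sym (d-1) E" "lf \<gamma>" and X: "X \<subseteq> E" and e: "e \<in> E"
  and sp: "MM.inspan X e"
  shows "NN.inspan ((\<lambda>e. \<gamma> + {#e#}) ` X) (\<gamma> + {#e#})"
proof -
  define h where "h = (\<lambda>e::nat. \<gamma> + {#e#})"
  have iE: "insert e X \<subseteq> E" using X e by simp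
  have r1: "rank_of N (h ` insert e X) = rank_of M (insert e X)" unfolding h_def by (rule rank_tr[OF g iE])
  have r2: "rank_of N (h ` X) = rank_of M X" unfolding h_def by (rule rank_tr[OF g X])
  have "rank_of N (insert (h e) (h ` X)) = rank_of N (h ` X)"
    using r1 r2 sp unfolding MM.inspan_def image_insert by simp
  hence "NN.inspan (h ` X) (h e)" unfolding NN.inspan_def .
  thus ?thesis unfolding h_def .
qed

lemma loop_dep: assumes y: "y \<in> Sym d E" and e: "e \<in># y" and l: "loop M e" shows "\<not> indep N {y}"
proof (cases "d = 1")
  case True
  have "size y = 1" using y True by (simp add: Sym_def)
  then obtain a where "y = {#a#}" using size_1_singleton_mset by blast
  hence ya: "{y} = (\<lambda>x. {#} + {#x#}) ` {e}" using e by simp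
  have eE: "e \<in> E" using y e by (auto simp: Sym_def)
  have g: "{#} \<in> Sym (d-1) E" "lf {#}" using True by (simp_all add: Sym_0 lf_def)
  have "indep N ((\<lambda>x. {#} + {#x#}) ` {e}) \<longleftrightarrow> indep M {e}" by (rule SING[OF g]) (use eE in blast)
  thus ?thesis using l ya unfolding loop_def by simp
next
  case False
  hence i: "d - 1 \<in> {1..d}" using d1 by simp
  have a: "{#e#} \<in> Sym (d - (d-1)) E" using False d1 y e by (auto simp: Sym_def)
  have nl: "\<not> (\<forall>x\<in>#{#e#}. \<not> loop M x)" using l by simp
  have "rk (restr N ((\<lambda>\<beta>. {#e#} + \<beta>) ` Sym (d-1) E)) = 0"
    using bspec[OF bspec[OF QP_parts(4) i] a] nl by simp
  hence r0: "rank_of N ((\<lambda>\<beta>. {#e#} + \<beta>) ` Sym (d-1) E) = 0" using rk_restr by simp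
  have "y - {#e#} \<in> Sym (d-1) E" using Sym_minus[OF y e] .
  moreover have "y = {#e#} + (y - {#e#})" using e by simp
  ultimately have "y \<in> (\<lambda>\<beta>. {#e#} + \<beta>) ` Sym (d-1) E" by (rule rev_image_eqI)
  hence sub: "{y} \<subseteq> (\<lambda>\<beta>. {#e#} + \<beta>) ` Sym (d-1) E" by simp
  show ?thesis
  proof
    assume "indep N {y}"
    from NN.rank_ge[OF sub this] r0 show False by simp
  qed
qed

lemma nonloop_indep: assumes y: "y \<in> Sym d E" and l: "lf y" shows "indep N {y}"
proof -
  have "size y = d" using y by (simp add: Sym_def)
  hence "y \<noteq> {#}" using d1 by auto
  then obtain e where e: "e \<in># y" by blast
  have g: "y - {#e#} \<in> Sym (d-1) E" using Sym_minus[OF y e] .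
  have lg: "lf (y - {#e#})" using l unfolding lf_def by (auto dest: in_diffD)
  have eE: "e \<in> E" using y e by (auto simp: Sym_def)
  have "indep N ((\<lambda>x. (y - {#e#}) + {#x#}) ` {e}) \<longleftrightarrow> indep M {e}" by (rule SING[OF g lg]) (use eE in blast)
  moreover have "indep M {e}" using nonloop_indep1[OF eE] l e unfolding lf_def by simp
  moreover have "(\<lambda>x. (y - {#e#}) + {#x#}) ` {e} = {y}" using e by simp
  ultimately show ?thesis by simp
qed

end


context qp begin

lemma T: fixes \<omega> :: "nat \<Rightarrow> ereal" and B :: "nat set"
  assumes B: "B \<subseteq> E" "indep M B" and good: "\<forall>y\<in>E. MM.inspan (B \<inter> {b. \<omega> y \<le> \<omega> b}) y"
  shows "j \<le> d \<Longrightarrow> \<gamma> \<in> Sym (d-j) E \<Longrightarrow> lf \<gamma> \<Longrightarrow> \<beta> \<in> Sym j E \<Longrightarrow>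
     NN.inspan (((+) \<gamma> ` Sym j B) \<inter> {z. mon_eval (\<gamma>+\<beta>) \<omega> \<le> mon_eval z \<omega>}) (\<gamma>+\<beta>)"
proof (induction j arbitrary: \<gamma> \<beta>)
  case 0
  hence "\<beta> = {#}" by (simp add: Sym_0)
  hence "\<gamma> + \<beta> \<in> ((+) \<gamma> ` Sym 0 B) \<inter> {z. mon_eval (\<gamma>+\<beta>) \<omega> \<le> mon_eval z \<omega>}" by (simp add: Sym_0)
  thus ?case by (rule NN.inspan_mem)
next
  case (Suc j)
  have yS: "\<gamma> + \<beta> \<in> Sym d E" using Sym_add[OF Suc.prems(2) Suc.prems(4)] Suc.prems(1) by simp
  show ?case
  proof (cases "lf (\<gamma>+\<beta>)")
    case False
    then obtain e where e: "e \<in># \<gamma>+\<beta>" "loop M e" unfolding lf_def by blast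
    have "\<not> indep N {\<gamma>+\<beta>}" by (rule loop_dep[OF yS e])
    thus ?thesis by (rule NN.dep_inspan)
  next
    case True
    have "size \<beta> = Suc j" using Suc.prems(4) by (simp add: Sym_def)
    hence "\<beta> \<noteq> {#}" by auto
    then obtain e where e: "e \<in># \<beta>" by blast
    define \<beta>' where "\<beta>' = \<beta> - {#e#}"
    have b': "\<beta>' \<in> Sym j E" unfolding \<beta>'_def using Sym_minus[OF Suc.prems(4) e] by simp
    define \<alpha> where "\<alpha> = \<gamma> + \<beta>'"
    have aS: "\<alpha> \<in> Sym (d-1) E" unfolding \<alpha>_def using Sym_add[OF Suc.prems(2) b'] Suc.prems(1) by simp
    have bb: "\<beta> = \<beta>' + {#e#}" unfolding \<beta>'_def using e by simp
    have ae: "\<alpha> + {#e#} = \<gamma> + \<beta>" unfolding \<alpha>_def using bb by (simp add: ac_simps)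
    have la: "lf \<alpha>" using True unfolding lf_def \<alpha>_def bb by auto
    have eE: "e \<in> E" using Suc.prems(4) e by (auto simp: Sym_def)
    define Be where "Be = B \<inter> {b. \<omega> e \<le> \<omega> b}"
    have BeE: "Be \<subseteq> E" unfolding Be_def using B(1) by blast
    have "MM.inspan Be e" unfolding Be_def using good eE by blast
    from span_tr[OF aS la BeE eE this]
    have sp: "NN.inspan ((\<lambda>b. \<alpha> + {#b#}) ` Be) (\<gamma> + \<beta>)" unfolding ae .
    define T0 where "T0 = ((+) \<gamma> ` Sym (Suc j) B) \<inter> {z. mon_eval (\<gamma>+\<beta>) \<omega> \<le> mon_eval z \<omega>}"
    have "\<forall>z\<in>(\<lambda>b. \<alpha> + {#b#}) ` Be. NN.inspan T0 z"
    proof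
      fix z assume "z \<in> (\<lambda>b. \<alpha> + {#b#}) ` Be"
      then obtain b where b: "b \<in> Be" "z = \<alpha> + {#b#}" by (rule imageE)
      have bB: "b \<in> B" and le: "\<omega> e \<le> \<omega> b" using b(1) unfolding Be_def by simp_all
      have bE: "b \<in> E" using bB B(1) by blast
      have "indep M {b}" using MM.indep_subset[OF B(2)] bB by simp
      hence nlb: "\<not> loop M b" unfolding loop_def by simp
      define g where "g = \<gamma> + {#b#}"
      have gS: "g \<in> Sym (d-j) E" unfolding g_def using Sym_add[OF Suc.prems(2), of "{#b#}" 1] bE Suc.prems(1)
        by (simp add: Sym_def)
      have lg: "lf g" unfolding g_def using Suc.prems(3) nlb unfolding lf_def by auto
      have IH: "NN.inspan (((+) g ` Sym j B) \<inter> {z. mon_eval (g+\<beta>') \<omega> \<le> mon_eval z \<omega>}) (g+\<beta>')"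
        using Suc.IH[OF _ gS lg b'] Suc.prems(1) by simp
      have zg: "g + \<beta>' = z" unfolding g_def b(2) \<alpha>_def by (simp add: ac_simps)
      have wle: "mon_eval (\<gamma>+\<beta>) \<omega> \<le> mon_eval z \<omega>"
      proof -
        have "mon_eval (\<gamma>+\<beta>) \<omega> = mon_eval \<alpha> \<omega> + \<omega> e" unfolding ae[symmetric] mon_eval_add mon_eval_single ..
        also have "\<dots> \<le> mon_eval \<alpha> \<omega> + \<omega> b" using le by (rule add_left_mono)
        also have "\<dots> = mon_eval z \<omega>" unfolding b(2) mon_eval_add mon_eval_single ..
        finally show ?thesis .
      qed
      have sub: "((+) g ` Sym j B) \<inter> {z'. mon_eval (g+\<beta>') \<omega> \<le> mon_eval z' \<omega>} \<subseteq> T0"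
      proof
        fix x assume x: "x \<in> ((+) g ` Sym j B) \<inter> {z'. mon_eval (g+\<beta>') \<omega> \<le> mon_eval z' \<omega>}"
        then obtain \<beta>2 where b2: "\<beta>2 \<in> Sym j B" "x = g + \<beta>2" by blast
        have "{#b#} + \<beta>2 \<in> Sym (Suc j) B" using b2(1) bB by (simp add: Sym_def)
        moreover have "x = \<gamma> + ({#b#} + \<beta>2)" unfolding b2(2) g_def by (simp add: ac_simps)
        ultimately have "x \<in> (+) \<gamma> ` Sym (Suc j) B" by (rule rev_image_eqI)
        moreover have "mon_eval (\<gamma>+\<beta>) \<omega> \<le> mon_eval x \<omega>" using x zg wle by auto
        ultimately show "x \<in> T0" unfolding T0_def by simp
      qed
      show "NN.inspan T0 z" using NN.inspan_mono[OF sub IH] zg by simp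
    qed
    from NN.inspan_trans[OF this sp] show ?thesis unfolding T0_def .
  qed
qed

end


lemma Vp_iff: assumes C: "finite C" "C \<noteq> {}" and om: "\<omega> \<in> tropn n"
  shows "\<omega> \<in> Vp n ev C \<longleftrightarrow> (\<forall>x\<in>C. ev x \<omega> \<noteq> \<infinity> \<longrightarrow> (\<exists>y\<in>C-{x}. ev y \<omega> \<le> ev x \<omega>))"
proof -
  define m where "m = Min ((\<lambda>x. ev x \<omega>) ` C)"
  have fI: "finite ((\<lambda>x. ev x \<omega>) ` C)" using C(1) by simp
  have neI: "(\<lambda>x. ev x \<omega>) ` C \<noteq> {}" using C(2) by simp
  have mle: "\<And>x. x \<in> C \<Longrightarrow> m \<le> ev x \<omega>" unfolding m_def using fI by simp
  have mem: "\<omega> \<in> Vp n ev C \<longleftrightarrow> (m = \<infinity> \<or> (\<exists>x\<in>C. \<exists>y\<in>C. x \<noteq> y \<and> ev x \<omega> = m \<and> ev y \<omega> = m))"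
    unfolding Vp_def m_def Let_def using om by simp
  show ?thesis
  proof
    assume "\<omega> \<in> Vp n ev C"
    hence H: "m = \<infinity> \<or> (\<exists>x\<in>C. \<exists>y\<in>C. x \<noteq> y \<and> ev x \<omega> = m \<and> ev y \<omega> = m)" using mem by simp
    show "\<forall>x\<in>C. ev x \<omega> \<noteq> \<infinity> \<longrightarrow> (\<exists>y\<in>C-{x}. ev y \<omega> \<le> ev x \<omega>)"
    proof (intro ballI impI)
      fix x assume x: "x \<in> C" "ev x \<omega> \<noteq> \<infinity>"
      have mx: "m \<le> ev x \<omega>" using mle[OF x(1)] .
      show "\<exists>y\<in>C-{x}. ev y \<omega> \<le> ev x \<omega>"
      proof (cases "m = \<infinity>")
        case True thus ?thesis using mx x(2) by simp
      next
        case False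
        then obtain a b where ab: "a \<in> C" "b \<in> C" "a \<noteq> b" "ev a \<omega> = m" "ev b \<omega> = m" using H by blast
        show ?thesis
        proof (cases "a = x")
          case True thus ?thesis using ab mx by (intro bexI[of _ b]) auto
        next
          case False thus ?thesis using ab mx by (intro bexI[of _ a]) auto
        qed
      qed
    qed
  next
    assume H: "\<forall>x\<in>C. ev x \<omega> \<noteq> \<infinity> \<longrightarrow> (\<exists>y\<in>C-{x}. ev y \<omega> \<le> ev x \<omega>)"
    have "m = \<infinity> \<or> (\<exists>x\<in>C. \<exists>y\<in>C. x \<noteq> y \<and> ev x \<omega> = m \<and> ev y \<omega> = m)"
    proof (cases "m = \<infinity>")
      case False
      have "m \<in> (\<lambda>x. ev x \<omega>) ` C" unfolding m_def by (rule Min_in[OF fI neI])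
      then obtain x where x: "x \<in> C" "m = ev x \<omega>" by (rule imageE)
      then obtain y where y: "y \<in> C - {x}" "ev y \<omega> \<le> ev x \<omega>" using H False by auto
      have "ev y \<omega> = m" using y(2) mle[of y] y(1) x(2) by (simp add: antisym)
      thus ?thesis using x y by (intro disjI2 bexI[of _ x] bexI[of _ y]) auto
    qed simp
    thus "\<omega> \<in> Vp n ev C" using mem by simp
  qed
qed

lemma tropV_iff: "\<omega> \<in> tropV n ev N \<longleftrightarrow> \<omega> \<in> tropn n \<and> (\<forall>C. circuit N C \<longrightarrow> \<omega> \<in> Vp n ev C)"
  unfolding tropV_def by simp

context qp begin

lemma berg_iff: "\<omega> \<in> bergman_fan n M \<longleftrightarrow> \<omega> \<in> tropn n \<and>
   (\<forall>C. circuit M C \<longrightarrow> (\<forall>x\<in>C. \<omega> x \<noteq> \<infinity> \<longrightarrow> (\<exists>y\<in>C-{x}. \<omega> y \<le> \<omega> x)))"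
proof -
  have "\<And>C. \<omega> \<in> tropn n \<Longrightarrow> circuit M C \<Longrightarrow> \<omega> \<in> Vp n (\<lambda>j \<omega>. \<omega> j) C \<longleftrightarrow>
     (\<forall>x\<in>C. \<omega> x \<noteq> \<infinity> \<longrightarrow> (\<exists>y\<in>C-{x}. \<omega> y \<le> \<omega> x))"
    by (rule Vp_iff) (simp_all add: MM.circuit_fin)
  thus ?thesis unfolding bergman_fan_def tropV_iff by auto
qed

lemma var_iff: "\<omega> \<in> variety n N \<longleftrightarrow> \<omega> \<in> tropn n \<and>
   (\<forall>C. circuit N C \<longrightarrow> (\<forall>x\<in>C. mon_eval x \<omega> \<noteq> \<infinity> \<longrightarrow> (\<exists>y\<in>C-{x}. mon_eval y \<omega> \<le> mon_eval x \<omega>)))"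
proof -
  have "\<And>C. \<omega> \<in> tropn n \<Longrightarrow> circuit N C \<Longrightarrow> \<omega> \<in> Vp n mon_eval C \<longleftrightarrow>
     (\<forall>x\<in>C. mon_eval x \<omega> \<noteq> \<infinity> \<longrightarrow> (\<exists>y\<in>C-{x}. mon_eval y \<omega> \<le> mon_eval x \<omega>))"
    by (rule Vp_iff) (simp_all add: NN.circuit_fin)
  thus ?thesis unfolding variety_def tropV_iff by auto
qed

lemma GB: assumes om: "\<omega> \<in> bergman_fan n M" and eE: "e \<in> E" and nl: "\<not> loop M e"
  shows "\<exists>B. basis M B \<and> e \<in> B \<and> (\<forall>y\<in>E. MM.inspan (B \<inter> {b. \<omega> y \<le> \<omega> b}) y)"
proof -
  have BF: "\<forall>C. circuit M C \<longrightarrow> (\<forall>x\<in>C. \<omega> x \<noteq> \<infinity> \<longrightarrow> (\<exists>y\<in>C-{x}. \<omega> y \<le> \<omega> x))"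
    using om berg_iff by simp
  define \<phi> where "\<phi> b = card {v \<in> \<omega> ` E. v \<le> \<omega> b}" for b
  have phi_less: "\<phi> b < \<phi> y" if "y \<in> E" "\<omega> b < \<omega> y" for b y
  proof -
    have "{v \<in> \<omega> ` E. v \<le> \<omega> b} \<subset> {v \<in> \<omega> ` E. v \<le> \<omega> y}"
    proof
      show "{v \<in> \<omega> ` E. v \<le> \<omega> b} \<subseteq> {v \<in> \<omega> ` E. v \<le> \<omega> y}" using that(2) by auto
      have "\<omega> y \<in> {v \<in> \<omega> ` E. v \<le> \<omega> y}" using that(1) by simp
      moreover have "\<omega> y \<notin> {v \<in> \<omega> ` E. v \<le> \<omega> b}"
      proof
        assume "\<omega> y \<in> {v \<in> \<omega> ` E. v \<le> \<omega> b}"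
        hence "\<omega> y \<le> \<omega> b" by simp
        thus False using that(2) by simp
      qed
      ultimately show "{v \<in> \<omega> ` E. v \<le> \<omega> b} \<noteq> {v \<in> \<omega> ` E. v \<le> \<omega> y}" by blast
    qed
    thus ?thesis unfolding \<phi>_def by (rule psubset_card_mono[rotated]) simp
  qed
  define S where "S = {B. basis M B \<and> e \<in> B}"
  have "S \<subseteq> Pow E" unfolding S_def basis_def using MM.indep_sub gM by auto
  hence fS: "finite S" using finite_subset by blast
  have "indep M {e}" by (rule nonloop_indep1[OF eE nl])
  then obtain B0 where "basis M B0" "{e} \<subseteq> B0" using MM.ex_basis by blast
  hence "B0 \<in> S" unfolding S_def by simp
  hence ne: "(\<lambda>B. sum \<phi> B) ` S \<noteq> {}" by blast
  have "Max ((\<lambda>B. sum \<phi> B) ` S) \<in> (\<lambda>B. sum \<phi> B) ` S" by (rule Max_in[OF finite_imageI[OF fS] ne])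
  then obtain B where BS: "B \<in> S" and Bm: "Max ((\<lambda>B. sum \<phi> B) ` S) = sum \<phi> B" by (rule imageE)
  have max: "sum \<phi> B' \<le> sum \<phi> B" if "B' \<in> S" for B'
    using Max_ge[OF finite_imageI[OF fS] imageI[OF that, of "sum \<phi>"]] Bm by simp
  have bB: "basis M B" and eB: "e \<in> B" using BS unfolding S_def by simp_all
  have iB: "indep M B" using bB unfolding basis_def by simp
  have BE: "B \<subseteq> E" using MM.indep_sub[OF iB] gM by simp
  have fB: "finite B" using MM.indep_finite[OF iB] .
  have good: "MM.inspan (B \<inter> {b. \<omega> y \<le> \<omega> b}) y" if yE: "y \<in> E" for y
  proof (rule ccontr)
    assume ns: "\<not> MM.inspan (B \<inter> {b. \<omega> y \<le> \<omega> b}) y"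
    have yB: "y \<notin> B"
    proof
      assume "y \<in> B" hence "y \<in> B \<inter> {b. \<omega> y \<le> \<omega> b}" by simp
      thus False using ns MM.inspan_mem[of y "B \<inter> {b. \<omega> y \<le> \<omega> b}"] by simp
    qed
    have "MM.inspan B y" by (rule MM.basis_span[OF bB])
    hence dep: "\<not> indep M (insert y B)" using MM.indep_inspan[OF iB yB] by simp
    have yg: "y \<in> ground M" using yE gM by simp
    obtain C where C: "circuit M C" "C \<subseteq> insert y B" "y \<in> C" using MM.fund_circuit[OF iB yg dep] by blast
    have ex: "\<exists>b\<in>C-{y}. \<omega> b < \<omega> y"
    proof (rule ccontr)
      assume A: "\<not> (\<exists>b\<in>C-{y}. \<omega> b < \<omega> y)"
      have "C - {y} \<subseteq> B \<inter> {b. \<omega> y \<le> \<omega> b}"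
      proof
        fix c assume c: "c \<in> C - {y}"
        hence "c \<in> B" using C(2) by blast
        moreover have "\<not> \<omega> c < \<omega> y" using A c by blast
        ultimately show "c \<in> B \<inter> {b. \<omega> y \<le> \<omega> b}" by (simp add: not_less)
      qed
      from MM.inspan_mono[OF this MM.circuit_span[OF C(1,3)]] ns show False by simp
    qed
    show False
    proof (cases "\<exists>b\<in>C-{y}-{e}. \<omega> b < \<omega> y")
      case True
      then obtain b where b: "b \<in> C" "b \<noteq> y" "b \<noteq> e" "\<omega> b < \<omega> y" by blast
      have bBB: "b \<in> B" using b C(2) by blast
      have iBb: "indep M (B - {b})" using MM.indep_subset[OF iB] by blast
      have ybb: "y \<notin> B - {b}" using yB by simp
      define B' where "B' = insert y (B - {b})"
      have iB': "indep M B'"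
      proof (rule ccontr)
        assume "\<not> indep M B'"
        hence sy: "MM.inspan (B - {b}) y" using MM.indep_inspan[OF iBb ybb] unfolding B'_def by simp
        have "\<forall>z\<in>C-{b}. MM.inspan (B - {b}) z"
        proof
          fix z assume z: "z \<in> C - {b}"
          show "MM.inspan (B - {b}) z"
          proof (cases "z = y")
            case True thus ?thesis using sy by simp
          next
            case False hence "z \<in> B - {b}" using z C(2) by blast
            thus ?thesis by (rule MM.inspan_mem)
          qed
        qed
        from MM.inspan_trans[OF this MM.circuit_span[OF C(1) b(1)]]
        have "MM.inspan (B - {b}) b" .
        moreover have "b \<notin> B - {b}" by simp
        moreover have "insert b (B - {b}) = B" using bBB by blast
        ultimately show False using MM.indep_inspan[OF iBb, of b] iB by simp
      qed
      have "card B' = Suc (card (B - {b}))" unfolding B'_def using fB ybb by simp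
      also have "\<dots> = card B" using card_Suc_Diff1[OF fB bBB] .
      finally have "card B' = card B" .
      hence "basis M B'" using MM.indep_card_basis[OF iB'] MM.basis_card[OF bB] by simp
      moreover have "e \<in> B'" unfolding B'_def using eB b(3) by simp
      ultimately have "B' \<in> S" unfolding S_def by simp
      hence le: "sum \<phi> B' \<le> sum \<phi> B" by (rule max)
      have s1: "sum \<phi> B' = sum \<phi> (B - {b}) + \<phi> y" unfolding B'_def using fB ybb by simp
      have s2: "sum \<phi> B = sum \<phi> (B - {b}) + \<phi> b" using sum.remove[OF fB bBB, of \<phi>] by simp
      have "\<phi> b < \<phi> y" by (rule phi_less[OF yE b(4)])
      thus False using le s1 s2 by simp
    next
      case False
      from ex obtain b where b: "b \<in> C" "b \<noteq> y" "\<omega> b < \<omega> y" by blast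
      have be: "b = e" using False b by blast
      have eC: "e \<in> C" using b be by simp
      have uniq: "\<forall>c\<in>C-{e}. \<omega> e < \<omega> c"
      proof
        fix c assume c: "c \<in> C - {e}"
        show "\<omega> e < \<omega> c"
        proof (cases "c = y")
          case True thus ?thesis using b be by simp
        next
          case False
          hence "\<not> \<omega> c < \<omega> y" using c \<open>\<not> (\<exists>b\<in>C-{y}-{e}. \<omega> b < \<omega> y)\<close> by blast
          thus ?thesis using b be by (simp add: not_less)
        qed
      qed
      have "\<omega> e \<noteq> \<infinity>" using b be by auto
      then obtain c where "c \<in> C - {e}" "\<omega> c \<le> \<omega> e" using BF C(1) eC by blast
      thus False using uniq by (simp add: not_less[symmetric])
    qed
  qed
  show ?thesis using bB eB good by blast
qed

end


lemma img_add0: "(+) ({#}::'a multiset) ` S = S" by simp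

context qp begin

definition goodP :: "(nat \<Rightarrow> ereal) \<Rightarrow> nat multiset set \<Rightarrow> nat multiset set \<Rightarrow> bool" where
  "goodP \<omega> P A \<longleftrightarrow> (\<forall>y\<in>A. NN.inspan (P \<inter> {z. mon_eval y \<omega> \<le> mon_eval z \<omega>}) y)"

lemma goodP_span: "goodP \<omega> P A \<Longrightarrow> y \<in> A \<Longrightarrow> NN.inspan P y"
  unfolding goodP_def using NN.inspan_mono[of _ P y] by blast

lemma F1: assumes ii: "\<forall>B. basis M B \<longrightarrow> basis N (Sym d B)" and bB: "basis M B"
  and i: "i \<in> {1..d}" and g: "\<gamma> \<in> Sym (d-i) E" "lf \<gamma>"
  shows "indep N ((+) \<gamma> ` Sym i B)"
proof (cases "B = {}")
  case True
  have "1 \<le> i" using i by simp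
  hence "Sym i B = {}" using True Sym_empty by simp
  thus ?thesis using NN.indep_empty by simp
next
  case False
  then obtain b where bB': "b \<in> B" by blast
  have iB: "indep M B" using bB unfolding basis_def by simp
  have BE: "B \<subseteq> E" using MM.indep_sub[OF iB] gM by simp
  have "indep M {b}" using MM.indep_subset[OF iB] bB' by simp
  hence nlb: "\<not> loop M b" unfolding loop_def by simp
  define g0 where "g0 = replicate_mset (d-i) b"
  have g0S: "g0 \<in> Sym (d-i) E" unfolding g0_def Sym_def using bB' BE by auto
  have lg0: "lf g0" unfolding g0_def lf_def using nlb by simp
  have SiE: "Sym i B \<subseteq> Sym i E" by (rule Sym_mono[OF BE])
  have sub: "(+) g0 ` Sym i B \<subseteq> Sym d B"
  proof
    fix x assume "x \<in> (+) g0 ` Sym i B"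
    then obtain \<beta> where b: "\<beta> \<in> Sym i B" "x = g0 + \<beta>" by (rule imageE)
    have "g0 \<in> Sym (d-i) B" unfolding g0_def Sym_def using bB' by auto
    from Sym_add[OF this b(1)] i b(2) show "x \<in> Sym d B" by simp
  qed
  have "indep N (Sym d B)" using ii bB unfolding basis_def by blast
  hence "indep N ((+) g0 ` Sym i B)" using NN.indep_subset sub by blast
  hence "indep (Ms i) (Sym i B)" using SI[OF i g0S lg0 SiE] by simp
  thus ?thesis using SI[OF i g SiE] by simp
qed

lemma count_gt: assumes "x \<in> (+) (\<gamma> + {#e#}) ` S" shows "count \<gamma> e < count x e"
proof -
  obtain b where "x = \<gamma> + {#e#} + b" using assms by blast
  thus ?thesis by simp
qed

lemma count_eq: assumes "x \<in> (+) \<gamma> ` Sym i (B - {e})" shows "count x e = count \<gamma> e"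
proof -
  obtain b where b: "b \<in> Sym i (B - {e})" "x = \<gamma> + b" using assms by blast
  have "e \<notin># b" using b(1) unfolding Sym_def by auto
  thus ?thesis using b(2) by (simp add: not_in_iff)
qed

lemma S: assumes ii: "\<forall>B. basis M B \<longrightarrow> basis N (Sym d B)" and om: "\<omega> \<in> bergman_fan n M"
  shows "k \<le> d \<Longrightarrow> \<gamma> \<in> Sym (d-k) E \<Longrightarrow> lf \<gamma> \<Longrightarrow> \<beta> \<in> Sym k E \<Longrightarrow> lf \<beta> \<Longrightarrow>
    \<exists>P. P \<subseteq> (+) \<gamma> ` Sym k E \<and> indep N P \<and> \<gamma> + \<beta> \<in> P \<and> goodP \<omega> P ((+) \<gamma> ` Sym k E)"
proof (induction k arbitrary: \<gamma> \<beta>)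
  case 0
  have b0: "\<beta> = {#}" using 0 by (simp add: Sym_0)
  have A: "(+) \<gamma> ` Sym 0 E = {\<gamma>}" by (simp add: Sym_0)
  have "\<gamma> \<in> Sym d E" using 0 by simp
  hence ind: "indep N {\<gamma>}" using nonloop_indep 0 by blast
  have "goodP \<omega> {\<gamma>} {\<gamma>}" unfolding goodP_def by (simp add: NN.inspan_mem)
  thus ?case using A ind b0 by (intro exI[of _ "{\<gamma>}"]) simp
next
  case (Suc k)
  note pr = Suc.prems
  have "size \<beta> = Suc k" using pr(4) by (simp add: Sym_def)
  hence "\<beta> \<noteq> {#}" by auto
  then obtain e where e: "e \<in># \<beta>" by blast
  define \<beta>' where "\<beta>' = \<beta> - {#e#}"
  have b': "\<beta>' \<in> Sym k E" unfolding \<beta>'_def using Sym_minus[OF pr(4) e] by simp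
  have lb': "lf \<beta>'" using pr(5) unfolding lf_def \<beta>'_def by (auto dest: in_diffD)
  have eE: "e \<in> E" using pr(4) e by (auto simp: Sym_def)
  have nle: "\<not> loop M e" using pr(5) e unfolding lf_def by simp
  define \<gamma>' where "\<gamma>' = \<gamma> + {#e#}"
  have g': "\<gamma>' \<in> Sym (d-k) E" unfolding \<gamma>'_def using Sym_add[OF pr(2), of "{#e#}" 1] eE pr(1)
    by (simp add: Sym_def)
  have lg': "lf \<gamma>'" unfolding \<gamma>'_def using pr(3) nle unfolding lf_def by auto
  have gb: "\<gamma>' + \<beta>' = \<gamma> + \<beta>" unfolding \<gamma>'_def \<beta>'_def using e by (simp add: ac_simps)
  obtain P' where P': "P' \<subseteq> (+) \<gamma>' ` Sym k E" "indep N P'" "\<gamma> + \<beta> \<in> P'" "goodP \<omega> P' ((+) \<gamma>' ` Sym k E)"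
    using Suc.IH[OF _ g' lg' b' lb'] pr(1) gb by auto
  obtain B where B: "basis M B" "e \<in> B" and gM': "\<forall>y\<in>E. MM.inspan (B \<inter> {b. \<omega> y \<le> \<omega> b}) y"
    using GB[OF om eE nle] by blast
  have iB: "indep M B" using B unfolding basis_def by simp
  have BE: "B \<subseteq> E" using MM.indep_sub[OF iB] gM by simp
  define A where "A = (+) \<gamma> ` Sym (Suc k) E"
  define A' where "A' = (+) \<gamma>' ` Sym k E"
  define Q where "Q = (+) \<gamma> ` Sym (Suc k) B"
  define Qe where "Qe = (+) \<gamma>' ` Sym k B"
  define R where "R = (+) \<gamma> ` Sym (Suc k) (B - {e})"
  have QU: "Q = Qe \<union> R"
  proof
    show "Q \<subseteq> Qe \<union> R"
    proof
      fix x assume "x \<in> Q"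
      then obtain b where b: "b \<in> Sym (Suc k) B" "x = \<gamma> + b" unfolding Q_def by blast
      show "x \<in> Qe \<union> R"
      proof (cases "e \<in># b")
        case True
        have "b - {#e#} \<in> Sym k B" using Sym_minus[OF b(1) True] by simp
        moreover have "x = \<gamma>' + (b - {#e#})" unfolding \<gamma>'_def b(2) using True by (simp add: ac_simps)
        ultimately show ?thesis unfolding Qe_def by blast
      next
        case False
        hence "b \<in> Sym (Suc k) (B - {e})" using b(1) unfolding Sym_def by auto
        thus ?thesis unfolding R_def using b(2) by blast
      qed
    qed
    show "Qe \<union> R \<subseteq> Q"
    proof
      fix x assume "x \<in> Qe \<union> R"
      thus "x \<in> Q"
      proof
        assume "x \<in> Qe"
        then obtain b where b: "b \<in> Sym k B" "x = \<gamma>' + b" unfolding Qe_def by blast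
        have "{#e#} + b \<in> Sym (Suc k) B" using b(1) B(2) by (simp add: Sym_def)
        moreover have "x = \<gamma> + ({#e#} + b)" unfolding b(2) \<gamma>'_def by (simp add: ac_simps)
        ultimately show "x \<in> Q" unfolding Q_def by (rule rev_image_eqI)
      next
        assume "x \<in> R"
        then obtain b where b: "b \<in> Sym (Suc k) (B - {e})" "x = \<gamma> + b" unfolding R_def by blast
        have "b \<in> Sym (Suc k) B" using b(1) Sym_mono[of "B - {e}" B] by blast
        thus "x \<in> Q" unfolding Q_def using b(2) by blast
      qed
    qed
  qed
  have i: "Suc k \<in> {1..d}" using pr(1) by simp
  have Qi: "indep N Q" unfolding Q_def by (rule F1[OF ii B(1) i pr(2,3)])
  have Tg: "\<And>j g b. j \<le> d \<Longrightarrow> g \<in> Sym (d-j) E \<Longrightarrow> lf g \<Longrightarrow> b \<in> Sym j E \<Longrightarrow>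
     NN.inspan (((+) g ` Sym j B) \<inter> {z. mon_eval (g+b) \<omega> \<le> mon_eval z \<omega>}) (g+b)"
    by (rule T[OF BE iB gM'])
  have Qg: "goodP \<omega> Q A" unfolding goodP_def
  proof
    fix y assume "y \<in> A"
    then obtain b where b: "b \<in> Sym (Suc k) E" "y = \<gamma> + b" unfolding A_def by blast
    show "NN.inspan (Q \<inter> {z. mon_eval y \<omega> \<le> mon_eval z \<omega>}) y"
      unfolding Q_def b(2) by (rule Tg[OF pr(1) pr(2) pr(3) b(1)])
  qed
  have Qeg: "goodP \<omega> Qe A'" unfolding goodP_def
  proof
    fix y assume "y \<in> A'"
    then obtain b where b: "b \<in> Sym k E" "y = \<gamma>' + b" unfolding A'_def by blast
    show "NN.inspan (Qe \<inter> {z. mon_eval y \<omega> \<le> mon_eval z \<omega>}) y"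
      unfolding Qe_def b(2) by (rule Tg) (use pr(1) g' lg' b(1) in auto)
  qed
  have A'A: "A' \<subseteq> A"
  proof
    fix x assume "x \<in> A'"
    then obtain b where b: "b \<in> Sym k E" "x = \<gamma>' + b" unfolding A'_def by blast
    have "{#e#} + b \<in> Sym (Suc k) E" using b(1) eE by (simp add: Sym_def)
    moreover have "x = \<gamma> + ({#e#} + b)" unfolding b(2) \<gamma>'_def by (simp add: ac_simps)
    ultimately show "x \<in> A" unfolding A_def by (rule rev_image_eqI)
  qed
  have QeA': "Qe \<subseteq> A'" unfolding Qe_def A'_def using Sym_mono[OF BE] by blast
  have RA: "R \<subseteq> A" unfolding R_def A_def using Sym_mono[of "B - {e}" E] BE by blast
  have P'A': "P' \<subseteq> A'" using P'(1) unfolding A'_def .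
  have AS: "A \<subseteq> ground N"
  proof
    fix x assume "x \<in> A"
    then obtain b where b: "b \<in> Sym (Suc k) E" "x = \<gamma> + b" unfolding A_def by blast
    from Sym_add[OF pr(2) b(1)] pr(1) b(2) N_ground show "x \<in> ground N" by simp
  qed
  have fA: "finite A" using finite_subset[OF AS NN.fin_ground] .
  have QA: "Q \<subseteq> A" using QU QeA' A'A RA by blast
  have fQe: "finite Qe" and fR: "finite R" and fP': "finite P'"
    using finite_subset[OF _ fA] QeA' A'A RA P'A' by blast+
  have Qei: "indep N Qe" using NN.indep_subset[OF Qi] QU by blast
  have c1: "rank_of N A' = card P'"
    by (rule NN.span_indep_card[OF P'(2) P'A']) (use goodP_span[OF P'(4)] A'_def in simp)
  have c2: "rank_of N A' = card Qe"
    by (rule NN.span_indep_card[OF Qei QeA']) (use goodP_span[OF Qeg] in simp)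
  have dP: "P' \<inter> R = {}"
  proof (rule ccontr)
    assume "P' \<inter> R \<noteq> {}"
    then obtain x where x: "x \<in> P'" "x \<in> R" by blast
    have "x \<in> (+) \<gamma>' ` Sym k E" by (rule subsetD[OF P'(1) x(1)])
    hence "count \<gamma> e < count x e" unfolding \<gamma>'_def by (rule count_gt)
    moreover have "x \<in> (+)\<gamma> ` Sym (Suc k) (B - {e})" using x(2) unfolding R_def .
    hence "count x e = count \<gamma> e" by (rule count_eq)
    ultimately show False by simp
  qed
  have dQ: "Qe \<inter> R = {}"
  proof (rule ccontr)
    assume "Qe \<inter> R \<noteq> {}"
    then obtain x where x: "x \<in> Qe" "x \<in> R" by blast
    have "x \<in> (+) (\<gamma> + {#e#}) ` Sym k B" using x(1) unfolding Qe_def \<gamma>'_def .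
    hence "count \<gamma> e < count x e" by (rule count_gt)
    moreover have "x \<in> (+)\<gamma> ` Sym (Suc k) (B - {e})" using x(2) unfolding R_def .
    hence "count x e = count \<gamma> e" by (rule count_eq)
    ultimately show False by simp
  qed
  define Q' where "Q' = P' \<union> R"
  have cQ: "card Q = card Qe + card R" unfolding QU by (rule card_Un_disjoint[OF fQe fR dQ])
  have cQ': "card Q' = card P' + card R" unfolding Q'_def by (rule card_Un_disjoint[OF fP' fR dP])
  have cc: "card Q' = card Q" using cQ cQ' c1 c2 by simp
  have Q'A: "Q' \<subseteq> A" unfolding Q'_def using P'A' A'A RA by blast
  have Q'Q: "\<forall>q\<in>Q. NN.inspan Q' q"
  proof
    fix q assume "q \<in> Q"
    hence "q \<in> Qe \<or> q \<in> R" using QU by blast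
    thus "NN.inspan Q' q"
    proof
      assume "q \<in> Qe"
      hence "NN.inspan P' q" using goodP_span[OF P'(4)] QeA' unfolding A'_def by blast
      thus ?thesis using NN.inspan_mono[of P' Q'] unfolding Q'_def by blast
    next
      assume "q \<in> R" thus ?thesis using NN.inspan_mem unfolding Q'_def by blast
    qed
  qed
  have Q'span: "\<forall>y\<in>A. NN.inspan Q' y"
  proof
    fix y assume "y \<in> A"
    from goodP_span[OF Qg this] show "NN.inspan Q' y" using NN.inspan_trans[OF Q'Q] by blast
  qed
  have rA: "rank_of N A = card Q" by (rule NN.span_indep_card[OF Qi QA]) (use goodP_span[OF Qg] in blast)
  have fQ': "finite Q'" using finite_subset[OF Q'A fA] .
  have Q'i: "indep N Q'" by (rule NN.span_card_indep[OF fQ' Q'A Q'span]) (simp add: cc rA)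
  have gbQ: "\<gamma> + \<beta> \<in> Q'" using P'(3) unfolding Q'_def by simp
  have Q'g: "goodP \<omega> Q' A" unfolding goodP_def
  proof
    fix y assume yA: "y \<in> A"
    let ?T = "Q' \<inter> {z. mon_eval y \<omega> \<le> mon_eval z \<omega>}"
    have h1: "NN.inspan (Q \<inter> {z. mon_eval y \<omega> \<le> mon_eval z \<omega>}) y" using Qg yA unfolding goodP_def by blast
    have "\<forall>z\<in>Q \<inter> {z. mon_eval y \<omega> \<le> mon_eval z \<omega>}. NN.inspan ?T z"
    proof
      fix z assume z: "z \<in> Q \<inter> {z. mon_eval y \<omega> \<le> mon_eval z \<omega>}"
      hence zle: "mon_eval y \<omega> \<le> mon_eval z \<omega>" by simp
      have "z \<in> Qe \<or> z \<in> R" using z QU by blast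
      thus "NN.inspan ?T z"
      proof
        assume "z \<in> Qe"
        hence "z \<in> A'" using QeA' by blast
        hence h: "NN.inspan (P' \<inter> {u. mon_eval z \<omega> \<le> mon_eval u \<omega>}) z"
          using P'(4) unfolding goodP_def A'_def by blast
        have "P' \<inter> {u. mon_eval z \<omega> \<le> mon_eval u \<omega>} \<subseteq> ?T"
        proof
          fix u assume "u \<in> P' \<inter> {u. mon_eval z \<omega> \<le> mon_eval u \<omega>}"
          hence "u \<in> P'" "mon_eval z \<omega> \<le> mon_eval u \<omega>" by simp_all
          moreover have "mon_eval y \<omega> \<le> mon_eval u \<omega>" using zle calculation(2) by (rule order_trans)
          ultimately show "u \<in> ?T" unfolding Q'_def by simp
        qed
        from NN.inspan_mono[OF this h] show ?thesis .
      next
        assume "z \<in> R"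
        hence "z \<in> ?T" using zle unfolding Q'_def by simp
        thus ?thesis by (rule NN.inspan_mem)
      qed
    qed
    from NN.inspan_trans[OF this h1] show "NN.inspan ?T y" .
  qed
  show ?case using Q'A Q'i gbQ Q'g unfolding A_def by blast
qed

end


lemma mon_eval_rep: "\<omega> x = ereal r \<Longrightarrow> mon_eval (replicate_mset k x) \<omega> = ereal (real k * r)"
proof (induction k)
  case 0 thus ?case by (simp add: mon_eval_def)
next
  case (Suc k)
  have "mon_eval (replicate_mset (Suc k) x) \<omega> = \<omega> x + mon_eval (replicate_mset k x) \<omega>"
    by (simp add: mon_eval_def)
  also have "\<dots> = ereal (r + real k * r)" using Suc by simp
  also have "r + real k * r = real (Suc k) * r" by (simp add: algebra_simps)
  finally show ?case .
qed

lemma mon_eval_inf: assumes "e \<in># x" "\<omega> e = \<infinity>" shows "mon_eval x \<omega> = \<infinity>"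
proof -
  have "x = {#e#} + (x - {#e#})" using assms(1) by simp
  hence "mon_eval x \<omega> = \<omega> e + mon_eval (x - {#e#}) \<omega>" using mon_eval_add mon_eval_single by metis
  thus ?thesis using assms(2) by simp
qed

lemma mon_eval_zero: "mon_eval z (\<lambda>_. 0) = 0"
  by (induction z) (simp_all add: mon_eval_def)

context qp begin

lemma mon_eval_nm: assumes "\<omega> \<in> tropn n" "set_mset z \<subseteq> E" shows "mon_eval z \<omega> \<noteq> -\<infinity>"
  using assms(2)
proof (induction z)
  case empty thus ?case by (simp add: mon_eval_def)
next
  case (add a z)
  have a: "\<omega> a \<noteq> -\<infinity>" using assms(1) add.prems unfolding tropn_def by auto
  have z: "mon_eval z \<omega> \<noteq> -\<infinity>" using add by simp
  have "mon_eval (add_mset a z) \<omega> = \<omega> a + mon_eval z \<omega>" by (simp add: mon_eval_def)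
  thus ?case using a z by (cases "\<omega> a"; cases "mon_eval z \<omega>") auto
qed

lemma loop_inf: assumes om: "\<omega> \<in> bergman_fan n M" and l: "loop M e" shows "\<omega> e = \<infinity>"
proof (rule ccontr)
  assume ne: "\<omega> e \<noteq> \<infinity>"
  have "circuit M {e}" using l MM.indep_empty unfolding loop_def circuit_def by simp
  hence "\<exists>y\<in>{e}-{e}. \<omega> y \<le> \<omega> e" using om ne unfolding berg_iff by blast
  thus False by simp
qed

lemma H2: assumes ii: "\<forall>B. basis M B \<longrightarrow> basis N (Sym d B)" shows "bergman_fan n M \<subseteq> variety n N"
proof
  fix \<omega> assume om: "\<omega> \<in> bergman_fan n M"
  have tn: "\<omega> \<in> tropn n" using om berg_iff by simp
  have "\<forall>C. circuit N C \<longrightarrow> (\<forall>x\<in>C. mon_eval x \<omega> \<noteq> \<infinity> \<longrightarrow> (\<exists>y\<in>C-{x}. mon_eval y \<omega> \<le> mon_eval x \<omega>))"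
  proof (intro allI impI ballI)
    fix C x assume C: "circuit N C" and x: "x \<in> C" and fx: "mon_eval x \<omega> \<noteq> \<infinity>"
    show "\<exists>y\<in>C-{x}. mon_eval y \<omega> \<le> mon_eval x \<omega>"
    proof (rule ccontr)
      assume A: "\<not> (\<exists>y\<in>C-{x}. mon_eval y \<omega> \<le> mon_eval x \<omega>)"
      have gt: "mon_eval x \<omega> < mon_eval y \<omega>" if "y \<in> C - {x}" for y
        using A that by (simp add: not_le[symmetric])
      have CS: "C \<subseteq> Sym d E" using C N_ground unfolding circuit_def by simp
      have xS: "x \<in> Sym d E" using CS x by blast
      have lx: "lf x"
      proof (rule ccontr)
        assume "\<not> lf x"
        then obtain e where e: "e \<in># x" "loop M e" unfolding lf_def by blast
        have "\<omega> e = \<infinity>" by (rule loop_inf[OF om e(2)])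
        hence "mon_eval x \<omega> = \<infinity>" by (rule mon_eval_inf[OF e(1)])
        thus False using fx by simp
      qed
      have g0: "{#} \<in> Sym (d-d) E" by (simp add: Sym_0)
      have l0: "lf {#}" by (simp add: lf_def)
      obtain P where P: "P \<subseteq> (+) {#} ` Sym d E" "indep N P" "{#} + x \<in> P" "goodP \<omega> P ((+) {#} ` Sym d E)"
        using S[OF ii om order_refl g0 l0 xS lx] by blast
      have xP: "x \<in> P" using P(3) by simp
      have gP: "goodP \<omega> P (Sym d E)" using P(4) by (simp only: img_add0)
      define T where "T = P \<inter> {z. mon_eval x \<omega> < mon_eval z \<omega>}"
      have "\<forall>y\<in>C-{x}. NN.inspan T y"
      proof
        fix y assume y: "y \<in> C - {x}"
        have "y \<in> Sym d E" using y CS by blast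
        hence h: "NN.inspan (P \<inter> {z. mon_eval y \<omega> \<le> mon_eval z \<omega>}) y" using gP unfolding goodP_def by blast
        have "P \<inter> {z. mon_eval y \<omega> \<le> mon_eval z \<omega>} \<subseteq> T"
        proof
          fix z assume "z \<in> P \<inter> {z. mon_eval y \<omega> \<le> mon_eval z \<omega>}"
          hence "z \<in> P" "mon_eval y \<omega> \<le> mon_eval z \<omega>" by simp_all
          moreover have "mon_eval x \<omega> < mon_eval z \<omega>" using gt[OF y] calculation(2) by (rule less_le_trans)
          ultimately show "z \<in> T" unfolding T_def by simp
        qed
        from NN.inspan_mono[OF this h] show "NN.inspan T y" .
      qed
      from NN.inspan_trans[OF this NN.circuit_span[OF C x]]
      have "NN.inspan T x" .
      moreover have "T \<subseteq> P - {x}" unfolding T_def by auto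
      ultimately have sp: "NN.inspan (P - {x}) x" using NN.inspan_mono by blast
      have iP: "indep N (P - {x})" using NN.indep_subset[OF P(2)] by blast
      have "insert x (P - {x}) = P" using xP by blast
      hence "\<not> NN.inspan (P - {x}) x" using NN.indep_inspan[OF iP, of x] P(2) by simp
      thus False using sp by simp
    qed
  qed
  thus "\<omega> \<in> variety n N" unfolding var_iff using tn by simp
qed

lemma VB: "variety n N \<subseteq> bergman_fan n M"
proof
  fix \<omega> assume om: "\<omega> \<in> variety n N"
  have tn: "\<omega> \<in> tropn n" using om var_iff by simp
  have VN: "\<forall>C. circuit N C \<longrightarrow> (\<forall>x\<in>C. mon_eval x \<omega> \<noteq> \<infinity> \<longrightarrow> (\<exists>y\<in>C-{x}. mon_eval y \<omega> \<le> mon_eval x \<omega>))"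
    using om var_iff by simp
  have "\<forall>C. circuit M C \<longrightarrow> (\<forall>x\<in>C. \<omega> x \<noteq> \<infinity> \<longrightarrow> (\<exists>y\<in>C-{x}. \<omega> y \<le> \<omega> x))"
  proof (intro allI impI ballI)
    fix C x assume C: "circuit M C" and x: "x \<in> C" and fx: "\<omega> x \<noteq> \<infinity>"
    have CE: "C \<subseteq> E" using C gM unfolding circuit_def by simp
    have xE: "x \<in> E" using CE x by blast
    have "\<omega> x \<noteq> -\<infinity>" using tn xE unfolding tropn_def by simp
    then obtain r where r: "\<omega> x = ereal r" using fx by (cases "\<omega> x") auto
    show "\<exists>y\<in>C-{x}. \<omega> y \<le> \<omega> x"
    proof (cases "loop M x")
      case True
      define y where "y = replicate_mset d x"
      have yS: "y \<in> Sym d E" unfolding y_def Sym_def using xE by auto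
      have "x \<in># y" unfolding y_def using d1 by simp
      hence ni: "\<not> indep N {y}" by (rule loop_dep[OF yS _ True])
      have "circuit N {y}" using ni yS N_ground NN.indep_empty unfolding circuit_def by simp
      hence "mon_eval y \<omega> \<noteq> \<infinity> \<longrightarrow> (\<exists>z\<in>{y}-{y}. mon_eval z \<omega> \<le> mon_eval y \<omega>)" using VN by blast
      moreover have "mon_eval y \<omega> = ereal (real d * r)" unfolding y_def by (rule mon_eval_rep[of \<omega> x r, OF r])
      ultimately show ?thesis by simp
    next
      case False
      define \<alpha> where "\<alpha> = replicate_mset (d-1) x"
      have aS: "\<alpha> \<in> Sym (d-1) E" unfolding \<alpha>_def Sym_def using xE by auto
      have la: "lf \<alpha>" unfolding \<alpha>_def lf_def using False by simp
      define h where "h = (\<lambda>e::nat. \<alpha> + {#e#})"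
      have inj: "inj h" unfolding h_def by (rule injI) simp
      have SG: "\<And>Y. Y \<subseteq> E \<Longrightarrow> indep N (h ` Y) \<longleftrightarrow> indep M Y" unfolding h_def by (rule SING[OF aS la])
      have hS: "h c \<in> Sym d E" if "c \<in> E" for c
        using Sym_add[OF aS, of "{#c#}" 1] that d1 unfolding h_def by (simp add: Sym_def)
      have cir: "circuit N (h ` C)" unfolding circuit_def
      proof (intro conjI ballI)
        show "h ` C \<subseteq> ground N" using hS CE N_ground by blast
        show "\<not> indep N (h ` C)" using SG[OF CE] C unfolding circuit_def by simp
        fix z assume "z \<in> h ` C"
        then obtain c where c: "c \<in> C" "z = h c" by blast
        have "h ` C - {z} = h ` (C - {c})" using c inj by (simp add: image_set_diff)
        moreover have "indep M (C - {c})" using C c(1) unfolding circuit_def by blast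
        moreover have "C - {c} \<subseteq> E" using CE by blast
        ultimately show "indep N (h ` C - {z})" using SG by simp
      qed
      have ma: "mon_eval \<alpha> \<omega> = ereal (real (d-1) * r)" unfolding \<alpha>_def by (rule mon_eval_rep[of \<omega> x r, OF r])
      have hx: "mon_eval (h x) \<omega> = ereal (real (d-1) * r) + ereal r"
        unfolding h_def mon_eval_add mon_eval_single ma r ..
      have "mon_eval (h x) \<omega> \<noteq> \<infinity>" using hx by simp
      moreover have "h x \<in> h ` C" using x by simp
      ultimately obtain z where z: "z \<in> h ` C - {h x}" "mon_eval z \<omega> \<le> mon_eval (h x) \<omega>"
        using VN cir by blast
      then obtain y where y: "y \<in> C" "z = h y" by blast
      have yx: "y \<noteq> x" using z(1) y(2) by blast
      have "mon_eval z \<omega> = ereal (real (d-1) * r) + \<omega> y"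
        unfolding y(2) h_def mon_eval_add mon_eval_single ma ..
      hence "ereal (real (d-1) * r) + \<omega> y \<le> ereal (real (d-1) * r) + \<omega> x" using z(2) hx r by simp
      hence "\<omega> y \<le> \<omega> x" by (simp add: ereal_add_le_add_iff)
      thus ?thesis using y(1) yx by blast
    qed
  qed
  thus "\<omega> \<in> bergman_fan n M" unfolding berg_iff using tn by simp
qed

end


lemma digits_bound: fixes K :: nat assumes "\<forall>j<r. c j < K" shows "(\<Sum>j<r. c j * K^j) < K^r"
  using assms
proof (induction r)
  case 0 thus ?case by simp
next
  case (Suc r)
  have "(\<Sum>j<Suc r. c j * K^j) = (\<Sum>j<r. c j * K^j) + c r * K^r" by simp
  also have "\<dots> < K^r + c r * K^r" using Suc by simp
  also have "\<dots> = (c r + 1) * K^r" by (simp add: algebra_simps)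
  also have "\<dots> \<le> K * K^r" using Suc.prems by (intro mult_right_mono) auto
  finally show ?case by simp
qed

lemma digits_inj: fixes K :: nat assumes "\<forall>j<r. c j < K" "\<forall>j<r. c' j < K"
  "(\<Sum>j<r. c j * K^j) = (\<Sum>j<r. c' j * K^j)" shows "\<forall>j<r. c j = c' j"
  using assms
proof (induction r)
  case 0 thus ?case by simp
next
  case (Suc r)
  have p1: "\<forall>j<r. c j < K" using Suc.prems(1) by simp
  have p2: "\<forall>j<r. c' j < K" using Suc.prems(2) by simp
  define S where "S = (\<Sum>j<r. c j * K^j)"
  define S' where "S' = (\<Sum>j<r. c' j * K^j)"
  have b1: "S < K^r" unfolding S_def by (rule digits_bound[OF p1])
  have b2: "S' < K^r" unfolding S'_def by (rule digits_bound[OF p2])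
  have eq: "S + c r * K^r = S' + c' r * K^r" using Suc.prems(3) unfolding S_def S'_def by simp
  have Kn: "K^r \<noteq> 0" using b1 by linarith
  have "(S + c r * K^r) div K^r = c r + S div K^r" by (rule div_mult_self1[OF Kn])
  also have "S div K^r = 0" using b1 by (rule div_less)
  finally have d1: "(S + c r * K^r) div K^r = c r" by simp
  have "(S' + c' r * K^r) div K^r = c' r + S' div K^r" by (rule div_mult_self1[OF Kn])
  also have "S' div K^r = 0" using b2 by (rule div_less)
  finally have d2: "(S' + c' r * K^r) div K^r = c' r" by simp
  have cr: "c r = c' r" using eq d1 d2 by simp
  hence "S = S'" using eq by simp
  hence IH: "\<forall>j<r. c j = c' j" using Suc.IH[OF p1 p2] unfolding S_def S'_def by blast
  show ?case
  proof (intro allI impI)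
    fix j assume "j < Suc r"
    thus "c j = c' j"
    proof (rule less_SucE)
      assume "j < r" thus ?thesis using IH by simp
    next
      assume "j = r" thus ?thesis using cr by simp
    qed
  qed
qed


context qp begin

lemma span_SymB: assumes bB: "basis M B" shows "\<forall>y\<in>Sym d E. NN.inspan (Sym d B) y"
proof
  fix y assume y: "y \<in> Sym d E"
  have iB: "indep M B" using bB unfolding basis_def by simp
  have BE: "B \<subseteq> E" using MM.indep_sub[OF iB] gM by simp
  have good: "\<forall>z\<in>E. MM.inspan (B \<inter> {b. (\<lambda>_. 0::ereal) z \<le> (\<lambda>_. 0) b}) z"
    using MM.basis_span[OF bB] by simp
  have g0: "{#} \<in> Sym (d-d) E" by (simp add: Sym_0)
  have l0: "lf {#}" by (simp add: lf_def)
  have "NN.inspan (((+) {#} ` Sym d B) \<inter> {z. mon_eval ({#}+y) (\<lambda>_. 0) \<le> mon_eval z (\<lambda>_. 0)}) ({#}+y)"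
    by (rule T[OF BE iB good order_refl g0 l0 y])
  thus "NN.inspan (Sym d B) y" by (simp add: mon_eval_zero)
qed

lemma H3: assumes BV: "bergman_fan n M \<subseteq> variety n N" shows "\<forall>B. basis M B \<longrightarrow> basis N (Sym d B)"
proof (intro allI impI)
  fix B assume bB: "basis M B"
  have iB: "indep M B" using bB unfolding basis_def by simp
  have BE: "B \<subseteq> E" using MM.indep_sub[OF iB] gM by simp
  have fB: "finite B" by (rule MM.indep_finite[OF iB])
  have SdB: "Sym d B \<subseteq> ground N" using Sym_mono[OF BE] N_ground by simp
  have sp: "\<forall>y\<in>Sym d E. NN.inspan (Sym d B) y" by (rule span_SymB[OF bB])
  have ind: "indep N (Sym d B)"
  proof (rule ccontr)
    assume dep: "\<not> indep N (Sym d B)"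
    obtain D where D: "D \<subseteq> Sym d B" "circuit N D" using NN.dep_circuit[OF SdB dep] by blast
    define r where "r = card B"
    obtain f where f: "bij_betw f {0..<r} B" using ex_bij_betw_nat_finite[OF fB] unfolding r_def by blast
    have finj: "inj_on f {0..<r}" and fim: "f ` {0..<r} = B" using f unfolding bij_betw_def by simp_all
    define K where "K = Suc d"
    have K1: "1 < K" unfolding K_def using d1 by simp
    define G where "G k = f ` {k..<r}" for k
    define L where "L e = {k. k < r \<and> MM.inspan (G k) e}" for e
    define lev where "lev e = Max (L e)" for e
    define \<omega> where "\<omega> e = (if e \<in> E then (if loop M e then \<infinity> else ereal (real (K ^ lev e))) else 0)" for e
    have GB: "G k \<subseteq> B" for k unfolding G_def using fim by auto
    have G0: "G 0 = B" unfolding G_def using fim by (simp add: atLeast0LessThan)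
    have Gmono: "G k' \<subseteq> G k" if "k \<le> k'" for k k' unfolding G_def using that by auto
    have fL: "finite (L e)" for e unfolding L_def by simp
    have L0: "0 \<in> L e" if eE: "e \<in> E" and nl: "\<not> loop M e" for e
    proof -
      have s: "MM.inspan B e" by (rule MM.basis_span[OF bB])
      have "r \<noteq> 0"
      proof
        assume "r = 0"
        hence "B = {}" unfolding r_def using fB by simp
        hence "MM.inspan {} e" using s by simp
        hence "\<not> indep M {e}" using MM.indep_inspan[OF MM.indep_empty, of e] by simp
        thus False using nonloop_indep1[OF eE nl] by simp
      qed
      thus ?thesis unfolding L_def using s G0 by simp
    qed
    have lev_in: "lev e \<in> L e" if "e \<in> E" "\<not> loop M e" for e
      unfolding lev_def using Max_in[OF fL] L0[OF that] by blast
    have lev_max: "k \<le> lev e" if "k \<in> L e" for k e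
      unfolding lev_def using Max_ge[OF fL that] .
    have fjB: "f j \<in> B" if "j < r" for j using fim that by auto
    have nlB: "\<not> loop M b" if "b \<in> B" for b
    proof -
      have "indep M {b}" using MM.indep_subset[OF iB] that by simp
      thus ?thesis unfolding loop_def by simp
    qed
    have levf: "lev (f j) = j" if j: "j < r" for j
    proof -
      have fjE: "f j \<in> E" using fjB[OF j] BE by blast
      have nl: "\<not> loop M (f j)" by (rule nlB[OF fjB[OF j]])
      have "f j \<in> G j" unfolding G_def using j by simp
      hence "j \<in> L (f j)" unfolding L_def using j MM.inspan_mem by simp
      hence le: "j \<le> lev (f j)" by (rule lev_max)
      have "\<not> j < lev (f j)"
      proof
        assume lt: "j < lev (f j)"
        have "lev (f j) \<in> L (f j)" by (rule lev_in[OF fjE nl])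
        hence ls: "MM.inspan (G (lev (f j))) (f j)" and lr: "lev (f j) < r" unfolding L_def by simp_all
        have "G (lev (f j)) \<subseteq> B - {f j}"
        proof
          fix z assume "z \<in> G (lev (f j))"
          then obtain k where k: "k \<in> {lev (f j)..<r}" "z = f k" unfolding G_def by blast
          have "k \<noteq> j" using k(1) lt by simp
          hence "f k \<noteq> f j" using finj k(1) j unfolding inj_on_def by auto
          moreover have "z \<in> B" using GB \<open>z \<in> G (lev (f j))\<close> by blast
          ultimately show "z \<in> B - {f j}" using k(2) by simp
        qed
        from MM.inspan_mono[OF this ls] have "MM.inspan (B - {f j}) (f j)" .
        moreover have "indep M (B - {f j})" using MM.indep_subset[OF iB] by blast
        moreover have "insert (f j) (B - {f j}) = B" using fjB[OF j] by blast
        ultimately show False using MM.indep_inspan[of "B - {f j}" "f j"] iB by simp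
      qed
      thus ?thesis using le by simp
    qed
    have wf: "\<omega> (f j) = ereal (real (K ^ j))" if j: "j < r" for j
      using fjB[OF j] BE nlB[OF fjB[OF j]] levf[OF j] unfolding \<omega>_def by auto
    have tn: "\<omega> \<in> tropn n" unfolding tropn_def \<omega>_def by auto
    have ob: "\<omega> \<in> bergman_fan n M" unfolding berg_iff
    proof (intro conjI tn allI impI ballI)
      fix C x assume C: "circuit M C" and x: "x \<in> C" and fx: "\<omega> x \<noteq> \<infinity>"
      show "\<exists>y\<in>C-{x}. \<omega> y \<le> \<omega> x"
      proof (rule ccontr)
        assume A: "\<not> (\<exists>y\<in>C-{x}. \<omega> y \<le> \<omega> x)"
        have CE: "C \<subseteq> E" using C gM unfolding circuit_def by simp
        have xE: "x \<in> E" using CE x by blast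
        have nlx: "\<not> loop M x" using fx xE unfolding \<omega>_def by auto
        define k1 where "k1 = Suc (lev x)"
        have "\<forall>y\<in>C-{x}. MM.inspan (G k1) y"
        proof
          fix y assume y: "y \<in> C - {x}"
          have yE: "y \<in> E" using y CE by blast
          show "MM.inspan (G k1) y"
          proof (cases "loop M y")
            case True
            hence "\<not> indep M {y}" unfolding loop_def by simp
            thus ?thesis by (rule MM.dep_inspan)
          next
            case False
            have "\<not> \<omega> y \<le> \<omega> x" using A y by blast
            hence "\<omega> x < \<omega> y" by (simp add: not_le)
            hence "real K ^ lev x < real K ^ lev y" using xE yE nlx False unfolding \<omega>_def by simp
            moreover have "1 < real K" using K1 by simp
            ultimately have "lev x < lev y" using power_strict_increasing_iff[of "real K" "lev x" "lev y"] by simp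
            hence "G (lev y) \<subseteq> G k1" unfolding k1_def by (intro Gmono) simp
            moreover have "MM.inspan (G (lev y)) y" using lev_in[OF yE False] unfolding L_def by simp
            ultimately show ?thesis by (rule MM.inspan_mono)
          qed
        qed
        from MM.inspan_trans[OF this MM.circuit_span[OF C x]]
        have sx: "MM.inspan (G k1) x" .
        show False
        proof (cases "k1 < r")
          case True
          hence "k1 \<in> L x" unfolding L_def using sx by simp
          hence "k1 \<le> lev x" by (rule lev_max)
          thus False unfolding k1_def by simp
        next
          case False
          hence "G k1 = {}" unfolding G_def by simp
          hence "MM.inspan {} x" using sx by simp
          hence "\<not> indep M {x}" using MM.indep_inspan[OF MM.indep_empty, of x] by simp
          thus False using nonloop_indep1[OF xE nlx] by simp
        qed
      qed
    qed
    have omV: "\<omega> \<in> variety n N" using BV ob by blast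
    define code where "code z = (\<Sum>j<r. count z (f j) * K^j)" for z
    have mcode: "set_mset z \<subseteq> B \<Longrightarrow> mon_eval z \<omega> = ereal (real (code z))" for z
    proof (induction z)
      case empty thus ?case unfolding code_def by (simp add: mon_eval_def)
    next
      case (add a z)
      have aB: "a \<in> B" using add.prems by simp
      then obtain j where j: "j < r" "f j = a" using fim by auto
      have cnt: "count (add_mset a z) (f i) * K^i = count z (f i) * K^i + (if i = j then K^i else 0)"
        if i: "i < r" for i
      proof -
        have "f i = a \<longleftrightarrow> i = j" using finj i j unfolding inj_on_def by auto
        thus ?thesis by auto
      qed
      have "code (add_mset a z) = (\<Sum>i<r. count z (f i) * K^i + (if i = j then K^i else 0))"
        unfolding code_def using cnt by (intro sum.cong) auto
      also have "\<dots> = code z + K^j" unfolding code_def sum.distrib using j(1) by simp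
      finally have ce: "code (add_mset a z) = code z + K^j" .
      have "mon_eval (add_mset a z) \<omega> = \<omega> a + mon_eval z \<omega>" by (simp add: mon_eval_def)
      also have "\<dots> = ereal (real (K^j)) + ereal (real (code z))" using wf[OF j(1)] j(2) add by simp
      also have "\<dots> = ereal (real (code (add_mset a z)))" using ce by simp
      finally show ?case .
    qed
    have cb: "count z a < K" if "z \<in> Sym d B" for z a
    proof -
      have "count z a \<le> size z" by (rule count_le_size)
      thus ?thesis using that unfolding Sym_def K_def by simp
    qed
    have code_inj: "z = z'" if z: "z \<in> Sym d B" "z' \<in> Sym d B" "code z = code z'" for z z'
    proof -
      have "\<forall>j<r. count z (f j) = count z' (f j)"
        using digits_inj[of r "\<lambda>j. count z (f j)" K "\<lambda>j. count z' (f j)"] cb z unfolding code_def by blast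
      show ?thesis
      proof (rule multiset_eqI)
        fix a show "count z a = count z' a"
        proof (cases "a \<in> B")
          case True
          then obtain j where "j < r" "f j = a" using fim by auto
          thus ?thesis using \<open>\<forall>j<r. count z (f j) = count z' (f j)\<close> by auto
        next
          case False
          hence "a \<notin># z" "a \<notin># z'" using z unfolding Sym_def by auto
          thus ?thesis by (simp add: not_in_iff)
        qed
      qed
    qed
    have fD: "finite D" and neD: "D \<noteq> {}" using NN.circuit_fin[OF D(2)] by simp_all
    have "Min (code ` D) \<in> code ` D" using fD neD by simp
    then obtain x where x: "x \<in> D" "Min (code ` D) = code x" by (rule imageE)
    have xm: "code x \<le> code y" if yD: "y \<in> D" for y
    proof -
      have "code y \<in> code ` D" using yD by (rule imageI)
      from Min_le[OF finite_imageI[OF fD] this] show ?thesis using x(2) by simp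
    qed
    have xS: "x \<in> Sym d B" using x(1) D(1) by blast
    have mx: "mon_eval x \<omega> = ereal (real (code x))" using xS by (intro mcode) (simp add: Sym_def)
    have "mon_eval x \<omega> \<noteq> \<infinity>" using mx by simp
    then obtain y where y: "y \<in> D - {x}" "mon_eval y \<omega> \<le> mon_eval x \<omega>"
      using omV D(2) x(1) unfolding var_iff by blast
    have yS: "y \<in> Sym d B" using y(1) D(1) by blast
    have my: "mon_eval y \<omega> = ereal (real (code y))" using yS by (intro mcode) (simp add: Sym_def)
    have "code y \<le> code x" using y(2) mx my by simp
    hence "code y = code x" using xm[of y] y(1) by simp
    hence "y = x" using code_inj[OF yS xS] by simp
    thus False using y(1) by simp
  qed
  have "rank_of N (ground N) = card (Sym d B)"
    by (rule NN.span_indep_card[OF ind SdB]) (use sp N_ground in simp)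
  thus "basis N (Sym d B)" using NN.indep_card_basis[OF ind] unfolding rk_def by simp
qed

end


context qp begin

lemma shift_ev: assumes tn: "\<omega> \<in> tropn n" and z: "set_mset z \<subseteq> E"
  shows "mon_eval z (\<lambda>j. if j \<in> E then \<omega> j - ereal c else \<omega> j) = mon_eval z \<omega> - ereal (real (size z) * c)"
  using z
proof (induction z)
  case empty thus ?case by (simp add: mon_eval_def zero_ereal_def)
next
  case (add a z)
  have aE: "a \<in> E" using add.prems by simp
  have a: "\<omega> a \<noteq> -\<infinity>" using tn aE unfolding tropn_def by auto
  have zE: "set_mset z \<subseteq> E" using add.prems by simp
  have zn: "mon_eval z \<omega> \<noteq> -\<infinity>" by (rule mon_eval_nm[OF tn zE])
  have IH: "mon_eval z (\<lambda>j. if j \<in> E then \<omega> j - ereal c else \<omega> j) = mon_eval z \<omega> - ereal (real (size z) * c)"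
    using add.IH zE by simp
  have "mon_eval (add_mset a z) (\<lambda>j. if j \<in> E then \<omega> j - ereal c else \<omega> j)
      = (\<omega> a - ereal c) + (mon_eval z \<omega> - ereal (real (size z) * c))"
    using IH aE by (simp add: mon_eval_def)
  also have "\<dots> = (\<omega> a + mon_eval z \<omega>) - ereal (real (size (add_mset a z)) * c)"
    using a zn by (cases "\<omega> a"; cases "mon_eval z \<omega>") (simp_all add: algebra_simps)
  also have "\<omega> a + mon_eval z \<omega> = mon_eval (add_mset a z) \<omega>" by (simp add: mon_eval_def)
  finally show ?case .
qed

lemma shift_berg: assumes om: "\<omega> \<in> bergman_fan n M"
  shows "(\<lambda>j. if j \<in> E then \<omega> j - ereal c else \<omega> j) \<in> bergman_fan n M"
proof -
  define \<omega>' where "\<omega>' = (\<lambda>j. if j \<in> E then \<omega> j - ereal c else \<omega> j)"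
  have tn: "\<omega> \<in> tropn n" and BF: "\<forall>C. circuit M C \<longrightarrow> (\<forall>x\<in>C. \<omega> x \<noteq> \<infinity> \<longrightarrow> (\<exists>y\<in>C-{x}. \<omega> y \<le> \<omega> x))"
    using om berg_iff by simp_all
  have mi: "a \<noteq> -\<infinity> \<Longrightarrow> a - ereal c \<noteq> -\<infinity>" for a :: ereal by (cases a) auto
  have tn': "\<omega>' \<in> tropn n" using tn mi unfolding tropn_def \<omega>'_def by auto
  have "\<forall>C. circuit M C \<longrightarrow> (\<forall>x\<in>C. \<omega>' x \<noteq> \<infinity> \<longrightarrow> (\<exists>y\<in>C-{x}. \<omega>' y \<le> \<omega>' x))"
  proof (intro allI impI ballI)
    fix C x assume C: "circuit M C" and x: "x \<in> C" and fx: "\<omega>' x \<noteq> \<infinity>"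
    have CE: "C \<subseteq> E" using C gM unfolding circuit_def by simp
    have "\<omega> x \<noteq> \<infinity>" using fx x CE unfolding \<omega>'_def by auto
    then obtain y where y: "y \<in> C - {x}" "\<omega> y \<le> \<omega> x" using BF C x by blast
    have "\<omega> y - ereal c \<le> \<omega> x - ereal c" using y(2) by (rule ereal_minus_mono) simp
    hence "\<omega>' y \<le> \<omega>' x" using x y(1) CE unfolding \<omega>'_def by auto
    thus "\<exists>y\<in>C-{x}. \<omega>' y \<le> \<omega>' x" using y(1) by blast
  qed
  thus ?thesis using tn' unfolding berg_iff \<omega>'_def by simp
qed

lemma H4: "bergman_fan n M \<subseteq> variety n N \<longleftrightarrow>
   (\<forall>\<omega>\<in>bergman_fan n M. flat N {x\<in>Sym d E. mon_eval x \<omega> > 0})"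
proof
  assume BV: "bergman_fan n M \<subseteq> variety n N"
  show "\<forall>\<omega>\<in>bergman_fan n M. flat N {x\<in>Sym d E. mon_eval x \<omega> > 0}"
  proof
    fix \<omega> assume om: "\<omega> \<in> bergman_fan n M"
    have VN: "\<forall>C. circuit N C \<longrightarrow> (\<forall>x\<in>C. mon_eval x \<omega> \<noteq> \<infinity> \<longrightarrow> (\<exists>y\<in>C-{x}. mon_eval y \<omega> \<le> mon_eval x \<omega>))"
      using BV om var_iff by blast
    define F where "F = {x\<in>Sym d E. mon_eval x \<omega> > 0}"
    have FS: "F \<subseteq> ground N" unfolding F_def N_ground by blast
    have "\<forall>e\<in>ground N - F. rank_of N F < rank_of N (insert e F)"
    proof
      fix e assume e: "e \<in> ground N - F"
      have eS: "e \<in> Sym d E" using e N_ground by simp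
      have we: "\<not> mon_eval e \<omega> > 0" using e eS unfolding F_def by simp
      show "rank_of N F < rank_of N (insert e F)"
      proof (rule ccontr)
        assume "\<not> rank_of N F < rank_of N (insert e F)"
        moreover have "rank_of N F \<le> rank_of N (insert e F)" by (rule NN.rank_mono) blast
        ultimately have rF: "rank_of N (insert e F) = rank_of N F" by simp
        obtain I where I: "I \<subseteq> F" "indep N I" "card I = rank_of N F" using NN.rank_ex by blast
        have "rank_of N (insert e I) \<le> rank_of N (insert e F)" using I(1) by (intro NN.rank_mono) blast
        hence "rank_of N (insert e I) \<le> rank_of N I" using rF I(3) NN.rank_indep[OF I(2)] by simp
        moreover have "rank_of N I \<le> rank_of N (insert e I)" by (rule NN.rank_mono) blast
        ultimately have "NN.inspan I e" unfolding NN.inspan_def by simp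
        moreover have eI: "e \<notin> I" using I(1) e by blast
        ultimately have "\<not> indep N (insert e I)" using NN.indep_inspan[OF I(2) eI] by simp
        then obtain C where C: "circuit N C" "C \<subseteq> insert e I" "e \<in> C"
          using NN.fund_circuit[OF I(2)] e by blast
        have "mon_eval e \<omega> \<le> 0" using we by (simp add: not_less)
        hence "mon_eval e \<omega> \<noteq> \<infinity>" by auto
        then obtain y where y: "y \<in> C - {e}" "mon_eval y \<omega> \<le> mon_eval e \<omega>" using VN C(1,3) by blast
        have "y \<in> F" using y(1) C(2) I(1) by blast
        hence "0 < mon_eval y \<omega>" unfolding F_def by simp
        thus False using y(2) \<open>mon_eval e \<omega> \<le> 0\<close> by simp
      qed
    qed
    thus "flat N {x\<in>Sym d E. mon_eval x \<omega> > 0}" using FS unfolding flat_def F_def by simp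
  qed
next
  assume iv: "\<forall>\<omega>\<in>bergman_fan n M. flat N {x\<in>Sym d E. mon_eval x \<omega> > 0}"
  show "bergman_fan n M \<subseteq> variety n N"
  proof
    fix \<omega> assume om: "\<omega> \<in> bergman_fan n M"
    have tn: "\<omega> \<in> tropn n" using om berg_iff by simp
    have "\<forall>C. circuit N C \<longrightarrow> (\<forall>x\<in>C. mon_eval x \<omega> \<noteq> \<infinity> \<longrightarrow> (\<exists>y\<in>C-{x}. mon_eval y \<omega> \<le> mon_eval x \<omega>))"
    proof (intro allI impI ballI)
      fix C x assume C: "circuit N C" and x: "x \<in> C" and fx: "mon_eval x \<omega> \<noteq> \<infinity>"
      show "\<exists>y\<in>C-{x}. mon_eval y \<omega> \<le> mon_eval x \<omega>"
      proof (rule ccontr)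
        assume A: "\<not> (\<exists>y\<in>C-{x}. mon_eval y \<omega> \<le> mon_eval x \<omega>)"
        have CS: "C \<subseteq> Sym d E" using C N_ground unfolding circuit_def by simp
        have xS: "x \<in> Sym d E" using CS x by blast
        have xE: "set_mset x \<subseteq> E" using xS unfolding Sym_def by simp
        have "mon_eval x \<omega> \<noteq> -\<infinity>" by (rule mon_eval_nm[OF tn xE])
        then obtain m where m: "mon_eval x \<omega> = ereal m" using fx by (cases "mon_eval x \<omega>") auto
        define c where "c = m / real d"
        define \<omega>' where "\<omega>' = (\<lambda>j. if j \<in> E then \<omega> j - ereal c else \<omega> j)"
        have om': "\<omega>' \<in> bergman_fan n M" unfolding \<omega>'_def by (rule shift_berg[OF om])
        have dc: "real d * c = m" unfolding c_def using d1 by simp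
        have ev: "mon_eval y \<omega>' = mon_eval y \<omega> - ereal m" if "y \<in> Sym d E" for y
        proof -
          have "set_mset y \<subseteq> E" "size y = d" using that unfolding Sym_def by simp_all
          thus ?thesis using shift_ev[OF tn, of y c] dc unfolding \<omega>'_def by simp
        qed
        have Fi: "y \<in> {x\<in>Sym d E. mon_eval x \<omega>' > 0} \<longleftrightarrow> ereal m < mon_eval y \<omega>" if "y \<in> Sym d E" for y
        proof -
          have "set_mset y \<subseteq> E" using that unfolding Sym_def by simp
          hence "mon_eval y \<omega> \<noteq> -\<infinity>" by (rule mon_eval_nm[OF tn])
          thus ?thesis using that ev[OF that] by (cases "mon_eval y \<omega>") auto
        qed
        define F where "F = {x\<in>Sym d E. mon_eval x \<omega>' > 0}"
        have fl: "flat N F" using iv om' unfolding F_def by blast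
        have xg: "x \<in> ground N - F" using xS Fi[OF xS] m N_ground unfolding F_def by simp
        have sub: "C - {x} \<subseteq> F"
        proof
          fix y assume y: "y \<in> C - {x}"
          have yS: "y \<in> Sym d E" using y CS by blast
          have "\<not> mon_eval y \<omega> \<le> mon_eval x \<omega>" using A y by blast
          hence "ereal m < mon_eval y \<omega>" using m by (simp add: not_le)
          thus "y \<in> F" using Fi[OF yS] unfolding F_def by simp
        qed
        have "NN.inspan F x" by (rule NN.inspan_mono[OF sub NN.circuit_span[OF C x]])
        moreover have "rank_of N F < rank_of N (insert x F)" using fl xg unfolding flat_def by blast
        ultimately show False unfolding NN.inspan_def by simp
      qed
    qed
    thus "\<omega> \<in> variety n N" unfolding var_iff using tn by simp
  qed
qed

lemma P1: "rk N = (rk M + d - 1) choose d \<longleftrightarrow> (\<forall>B. basis M B \<longrightarrow> basis N (Sym d B))"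
proof -
  have rkN: "rk N = rank_of N (Sym d B)" if bB: "basis M B" for B
  proof -
    have iB: "indep M B" using bB unfolding basis_def by simp
    have BE: "B \<subseteq> E" using MM.indep_sub[OF iB] gM by simp
    have "rank_of N (Sym d B \<union> Sym d E) = rank_of N (Sym d B)"
      by (rule NN.rank_union_span[OF span_SymB[OF bB]])
    moreover have "Sym d B \<union> Sym d E = Sym d E" using Sym_mono[OF BE] by blast
    ultimately show ?thesis unfolding rk_def N_ground by simp
  qed
  have cS: "card (Sym d B) = (rk M + d - 1) choose d" if bB: "basis M B" for B
  proof -
    have iB: "indep M B" using bB unfolding basis_def by simp
    show ?thesis using Sym_card[OF MM.indep_finite[OF iB]] MM.basis_card[OF bB] by simp
  qed
  show ?thesis
  proof
    assume i: "rk N = (rk M + d - 1) choose d"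
    show "\<forall>B. basis M B \<longrightarrow> basis N (Sym d B)"
    proof (intro allI impI)
      fix B assume bB: "basis M B"
      have iB: "indep M B" using bB unfolding basis_def by simp
      have fS: "finite (Sym d B)" by (rule Sym_fin[OF MM.indep_finite[OF iB]])
      have c: "card (Sym d B) = rk N" using i cS[OF bB] by simp
      have "indep N (Sym d B)"
        by (rule NN.span_card_indep[OF fS subset_refl]) (simp_all add: NN.inspan_mem c rkN[OF bB])
      thus "basis N (Sym d B)" using NN.indep_card_basis c by simp
    qed
  next
    assume ii: "\<forall>B. basis M B \<longrightarrow> basis N (Sym d B)"
    obtain B where bB: "basis M B" using MM.ex_basis[OF MM.indep_empty] by blast
    have "basis N (Sym d B)" using ii bB by simp
    hence "card (Sym d B) = rk N" by (rule NN.basis_card)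
    thus "rk N = (rk M + d - 1) choose d" using cS[OF bB] by simp
  qed
qed

end

theorem proposition2p21:
  fixes n d :: nat and M :: "nat matroid" and Ms :: "nat \<Rightarrow> nat multiset matroid"
  assumes "is_matroid M" and "ground M = {1..n}"
    and "sym_quasi_power n M d Ms"
  shows "(rk (Ms d) = (rk M + d - 1) choose d
           \<longleftrightarrow> (\<forall>B. basis M B \<longrightarrow> basis (Ms d) (Sym d B)))
       \<and> ((\<forall>B. basis M B \<longrightarrow> basis (Ms d) (Sym d B))
           \<longleftrightarrow> variety n (Ms d) = bergman_fan n M)
       \<and> (variety n (Ms d) = bergman_fan n M
           \<longleftrightarrow> (\<forall>\<omega>\<in>bergman_fan n M. flat (Ms d) {x\<in>Sym d {1..n}. mon_eval x \<omega> > 0}))"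
proof -
  interpret Q: qp n d M Ms using assms by (rule qp.intro)
  have a: "rk (Ms d) = (rk M + d - 1) choose d \<longleftrightarrow> (\<forall>B. basis M B \<longrightarrow> basis (Ms d) (Sym d B))"
    by (rule Q.P1)
  have VB: "variety n (Ms d) \<subseteq> bergman_fan n M" by (rule Q.VB)
  have b: "(\<forall>B. basis M B \<longrightarrow> basis (Ms d) (Sym d B)) \<longleftrightarrow> variety n (Ms d) = bergman_fan n M"
  proof
    assume "\<forall>B. basis M B \<longrightarrow> basis (Ms d) (Sym d B)"
    from Q.H2[OF this] VB show "variety n (Ms d) = bergman_fan n M" by (rule subset_antisym[rotated])
  next
    assume "variety n (Ms d) = bergman_fan n M"
    hence "bergman_fan n M \<subseteq> variety n (Ms d)" by simp
    thus "\<forall>B. basis M B \<longrightarrow> basis (Ms d) (Sym d B)" by (rule Q.H3)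
  qed
  have c: "variety n (Ms d) = bergman_fan n M \<longleftrightarrow>
     (\<forall>\<omega>\<in>bergman_fan n M. flat (Ms d) {x\<in>Sym d {1..n}. mon_eval x \<omega> > 0})"
  proof -
    have "variety n (Ms d) = bergman_fan n M \<longleftrightarrow> bergman_fan n M \<subseteq> variety n (Ms d)" using VB by blast
    also have "\<dots> \<longleftrightarrow> (\<forall>\<omega>\<in>bergman_fan n M. flat (Ms d) {x\<in>Sym d {1..n}. mon_eval x \<omega> > 0})" by (rule Q.H4)
    finally show ?thesis .
  qed
  show ?thesis using a b c by simp
qed


end
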